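(* Let $\mu$ be a finite Borel measure on $(-\pi,\pi)$ without singular continuous part, $b\in(-\pi,0)\cup(0,\pi)$, $I=[b,\pi]$ if $b>0$ and $I=[-\pi,b]$ if $b<0$, $\mu_H$ the polarization of $\mu$ with respect to $b$, and $\phi:\mathbb{R}\to\mathbb{R}$ convex and increasing. Then: (a) for $x\in I$ and $x'=2b-x$: $\phi(u_\mu(x))+\phi(u_\mu(x'))\le\phi(u_{\mu_H}(x))+\phi(u_{\mu_H}(x'))$; (b) if $b>0$ and $x\in[-\pi,b]$ (respectively $b<0$ and $x\in[b,\pi]$), then $\phi(u_\mu(x))\le\phi(u_{\mu_H}(x))$. If moreover $\phi$ is strictly increasing, then for $b>0$ (resp. $b<0$) the following are equivalent: (i) equality holds in (b) for some $x\in(-\pi,b]$ (resp. $x\in[b,\pi)$); (ii) equality holds in (b) for all $x\in(-\pi,b]$ (resp. $x\in[b,\pi)$); (iii) $\mu=\mu_H$.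
   Context: A "Borel measure on $(-\pi,\pi)$" means a positive, non-zero measure on the Borel sets of $(-\pi,\pi)$; $\lambda$ is Lebesgue measure. $G(x,y)=-\frac{xy}{2\pi}-\frac12|x-y|+\frac{\pi}{2}$ on $[-\pi,\pi]^2$ and $u_\mu(x)=\int G(x,y)\,d\mu(y)$. "Without singular continuous part" means $\mu=\nu+\delta$ with $d\nu=f\,d\lambda$, $0\le f\in L^1[-\pi,\pi]$, and $\delta=\sum_i a_i\delta_{x_i}$ purely discontinuous. Polarization of $f$ w.r.t. $b$: if $b\in(0,\pi)$, $f_H=f$ on $[-\pi,2b-\pi)$, $f_H(x)=\max\{f(x),f(2b-x)\}$ on $[2b-\pi,b]$, $f_H(x)=\min\{f(x),f(2b-x)\}$ on $[b,\pi]$; if $b\in(-\pi,0)$, $f_H(x)=\min\{f(x),f(2b-x)\}$ on $[-\pi,b]$, $f_H(x)=\max\{f(x),f(2b-x)\}$ on $[b,2b+\pi]$, $f_H=f$ on $(2b+\pi,\pi]$. $\delta_H$ is the purely discontinuous measure obtained by the same rule applied to the point-mass function $x\mapsto\delta(\{x\})$ on $(-\pi,\pi)$. Then $\mu_H=\nu_H+\delta_H$ with $d\nu_H=f_H\,d\lambda$. *)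

theory Defs
  imports "HOL-Analysis.Analysis"
begin

definition Gk :: "real \<Rightarrow> real \<Rightarrow> real" where
  "Gk x y = - (x * y) / (2 * pi) - \<bar>x - y\<bar> / 2 + pi / 2"

text \<open>The Borel measure on (-pi,pi) with absolutely continuous part f d lambda and
  purely discontinuous part sum_x a(x) delta_x (a = the point-mass function).\<close>
definition disc_ac_measure :: "(real \<Rightarrow> real) \<Rightarrow> (real \<Rightarrow> real) \<Rightarrow> real measure" where
  "disc_ac_measure f a =
     measure_of {-pi<..<pi} (sets (restrict_space borel {-pi<..<pi}))
       (\<lambda>A. (\<integral>\<^sup>+ x. ennreal (f x) * indicator A x \<partial>lebesgue)
            + (\<integral>\<^sup>+ x. ennreal (a x) * indicator A x \<partial>count_space UNIV))"

definition u_meas :: "real measure \<Rightarrow> real \<Rightarrow> real" where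
  "u_meas \<mu> x = (\<integral> y. Gk x y \<partial>\<mu>)"

definition polar :: "real \<Rightarrow> (real \<Rightarrow> real) \<Rightarrow> real \<Rightarrow> real" where
  "polar b g x =
    (if 0 < b then
       (if x < 2 * b - pi then g x
        else if x \<le> b then max (g x) (g (2 * b - x))
        else min (g x) (g (2 * b - x)))
     else
       (if x \<le> b then min (g x) (g (2 * b - x))
        else if x \<le> 2 * b + pi then max (g x) (g (2 * b - x))
        else g x))"

end

theory Submission
  imports Defs
begin


lemma dam_space: "space (disc_ac_measure f a) = {-pi<..<pi}"
  unfolding disc_ac_measure_def by (simp add: space_measure_of_conv)

lemma dam_sets: "sets (disc_ac_measure f a) = sets (restrict_space borel {-pi<..<pi})"
proof -
  have sub: "sets (restrict_space borel {-pi<..<pi}) \<subseteq> Pow {-pi<..<pi}"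
    using sets.space_closed[of "restrict_space borel {-pi<..<pi}"] by (simp add: space_restrict_space)
  have "sigma_sets {-pi<..<pi} (sets (restrict_space borel {-pi<..<pi})) = sets (restrict_space borel {-pi<..<pi})"
    using sets.sigma_sets_eq[of "restrict_space borel {-pi<..<pi}"] by (simp add: space_restrict_space)
  then show ?thesis unfolding disc_ac_measure_def using sub by (simp add: sets_measure_of)
qed

lemma sets_rb_lebesgue: "A \<in> sets (restrict_space borel {-pi<..<pi}) \<Longrightarrow> A \<in> sets (lebesgue :: real measure)"
  by (simp add: sets_restrict_space_iff)

lemma sets_rb_sub: "A \<in> sets (restrict_space borel {-pi<..<pi}) \<Longrightarrow> A \<subseteq> {-pi<..<pi}"
  by (auto simp: sets_restrict_space_iff)

lemma dam_emeasure:
  assumes fm: "f \<in> borel_measurable lebesgue"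
    and A: "A \<in> sets (restrict_space borel {-pi<..<pi})"
  shows "emeasure (disc_ac_measure f a) A =
     (\<integral>\<^sup>+ x. ennreal (f x) * indicator A x \<partial>lebesgue)
            + (\<integral>\<^sup>+ x. ennreal (a x) * indicator A x \<partial>count_space UNIV)"
  unfolding disc_ac_measure_def
proof (rule emeasure_measure_of_sigma)
  show "sigma_algebra {- pi<..<pi} (sets (restrict_space borel {- pi<..<pi}))"
    using sets.sigma_algebra_axioms[of "restrict_space borel {-pi<..<pi}"]
    by (simp add: space_restrict_space)
  show "positive (sets (restrict_space borel {- pi<..<pi}))
     (\<lambda>A. (\<integral>\<^sup>+ x. ennreal (f x) * indicator A x \<partial>lebesgue) +
          (\<integral>\<^sup>+ x. ennreal (a x) * indicator A x \<partial>count_space UNIV))"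
    by (simp add: positive_def)
  show "countably_additive (sets (restrict_space borel {- pi<..<pi}))
     (\<lambda>A. (\<integral>\<^sup>+ x. ennreal (f x) * indicator A x \<partial>lebesgue) +
          (\<integral>\<^sup>+ x. ennreal (a x) * indicator A x \<partial>count_space UNIV))"
    unfolding countably_additive_def
  proof (intro allI impI)
    fix B :: "nat \<Rightarrow> real set"
    assume r: "range B \<subseteq> sets (restrict_space borel {- pi<..<pi})" and d: "disjoint_family B"
    have Bl: "B i \<in> sets lebesgue" for i using r sets_rb_lebesgue by auto
    have m1: "(\<lambda>x. ennreal (f x) * indicator (B i) x) \<in> borel_measurable lebesgue" for i
      using fm Bl by measurable
    have e1: "(\<Sum>i. \<integral>\<^sup>+ x. ennreal (f x) * indicator (B i) x \<partial>lebesgue)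
        = (\<integral>\<^sup>+ x. ennreal (f x) * indicator (\<Union> (range B)) x \<partial>lebesgue)"
      by (subst nn_integral_suminf[symmetric, OF m1])
         (simp add: ennreal_suminf_cmult suminf_indicator[OF d])
    have e2: "(\<Sum>i. \<integral>\<^sup>+ x. ennreal (a x) * indicator (B i) x \<partial>count_space UNIV)
        = (\<integral>\<^sup>+ x. ennreal (a x) * indicator (\<Union> (range B)) x \<partial>count_space UNIV)"
      by (subst nn_integral_suminf[symmetric])
         (simp_all add: ennreal_suminf_cmult suminf_indicator[OF d])
    show "(\<Sum>i. (\<integral>\<^sup>+ x. ennreal (f x) * indicator (B i) x \<partial>lebesgue) +
          (\<integral>\<^sup>+ x. ennreal (a x) * indicator (B i) x \<partial>count_space UNIV)) =
         (\<integral>\<^sup>+ x. ennreal (f x) * indicator (\<Union> (range B)) x \<partial>lebesgue) +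
         (\<integral>\<^sup>+ x. ennreal (a x) * indicator (\<Union> (range B)) x \<partial>count_space UNIV)"
      by (subst suminf_add[symmetric]) (auto simp: e1 e2)
  qed
qed (rule A)


lemma dam_meas_leb:
  assumes g: "g \<in> borel_measurable (disc_ac_measure f a)"
  shows "(\<lambda>x. g x * indicator {-pi<..<pi} x :: ennreal) \<in> borel_measurable lebesgue"
proof -
  have "g \<in> borel_measurable (restrict_space borel {-pi<..<pi})"
    using g measurable_cong_sets[OF dam_sets refl] by blast
  then have "(\<lambda>x. if x \<in> {-pi<..<pi} then g x else 0) \<in> borel_measurable borel"
    by (subst (asm) measurable_restrict_space_iff) auto
  moreover have "(\<lambda>x. if x \<in> {-pi<..<pi} then g x else 0) = (\<lambda>x. g x * indicator {-pi<..<pi} x)"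
    by (auto simp: indicator_def)
  ultimately show ?thesis
    using measurable_completion measurable_lborel2 by (metis (no_types, lifting))
qed

lemma dam_nn_integral:
  assumes fm: "f \<in> borel_measurable lebesgue" and asupp: "\<And>x. x \<notin> {-pi<..<pi} \<Longrightarrow> a x = 0"
    and g: "g \<in> borel_measurable (disc_ac_measure f a)"
  shows "(\<integral>\<^sup>+x. g x \<partial>disc_ac_measure f a) =
     (\<integral>\<^sup>+x. ennreal (f x) * (g x * indicator {-pi<..<pi} x) \<partial>lebesgue)
   + (\<integral>\<^sup>+x. ennreal (a x) * g x \<partial>count_space UNIV)"
  using g
proof (induction rule: borel_measurable_induct)
  case (cong u v)
  have "(\<integral>\<^sup>+x. u x \<partial>disc_ac_measure f a) = (\<integral>\<^sup>+x. v x \<partial>disc_ac_measure f a)"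
    by (rule nn_integral_cong) (use cong in auto)
  moreover have "(\<integral>\<^sup>+x. ennreal (f x) * (u x * indicator {-pi<..<pi} x) \<partial>lebesgue) =
      (\<integral>\<^sup>+x. ennreal (f x) * (v x * indicator {-pi<..<pi} x) \<partial>lebesgue)"
    by (rule nn_integral_cong) (use cong in \<open>auto simp: dam_space indicator_def\<close>)
  moreover have "(\<integral>\<^sup>+x. ennreal (a x) * u x \<partial>count_space UNIV) = (\<integral>\<^sup>+x. ennreal (a x) * v x \<partial>count_space UNIV)"
  proof (rule nn_integral_cong)
    fix x show "ennreal (a x) * u x = ennreal (a x) * v x"
      by (cases "x \<in> {-pi<..<pi}") (use cong asupp in \<open>auto simp: dam_space\<close>)
  qed
  ultimately show ?case using cong by simp
next
  case (set A)
  then have A: "A \<in> sets (restrict_space borel {-pi<..<pi})" by (simp add: dam_sets)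
  have "\<And>x. indicator A x * indicator {-pi<..<pi} x = (indicator A x :: ennreal)"
    using sets_rb_sub[OF A] by (force simp: indicator_def)
  then show ?case using set dam_emeasure[OF fm A] by simp
next
  case (mult u c)
  have m: "(\<lambda>x. ennreal (f x) * (u x * indicator {-pi<..<pi} x)) \<in> borel_measurable lebesgue"
    using fm dam_meas_leb[OF mult(2)] by measurable
  have "(\<integral>\<^sup>+x. c * u x \<partial>disc_ac_measure f a) = c * (\<integral>\<^sup>+x. u x \<partial>disc_ac_measure f a)"
    by (rule nn_integral_cmult) (fact mult(2))
  moreover have "(\<integral>\<^sup>+x. ennreal (f x) * (c * u x * indicator {-pi<..<pi} x) \<partial>lebesgue)
     = c * (\<integral>\<^sup>+x. ennreal (f x) * (u x * indicator {-pi<..<pi} x) \<partial>lebesgue)"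
    by (subst nn_integral_cmult[symmetric, OF m]) (simp add: ac_simps)
  moreover have "(\<integral>\<^sup>+x. ennreal (a x) * (c * u x) \<partial>count_space UNIV)
     = c * (\<integral>\<^sup>+x. ennreal (a x) * u x \<partial>count_space UNIV)"
    by (subst nn_integral_cmult[symmetric]) (simp_all add: ac_simps)
  ultimately show ?case using mult.IH by (simp add: distrib_left)
next
  case (add u v)
  have mu: "(\<lambda>x. ennreal (f x) * (u x * indicator {-pi<..<pi} x)) \<in> borel_measurable lebesgue"
    using fm dam_meas_leb[OF add(1)] by measurable
  have mv: "(\<lambda>x. ennreal (f x) * (v x * indicator {-pi<..<pi} x)) \<in> borel_measurable lebesgue"
    using fm dam_meas_leb[OF add(3)] by measurable
  have "(\<integral>\<^sup>+x. v x + u x \<partial>disc_ac_measure f a) = (\<integral>\<^sup>+x. v x \<partial>disc_ac_measure f a) + (\<integral>\<^sup>+x. u x \<partial>disc_ac_measure f a)"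
    by (rule nn_integral_add) (use add in auto)
  moreover have "(\<integral>\<^sup>+x. ennreal (f x) * ((v x + u x) * indicator {-pi<..<pi} x) \<partial>lebesgue)
     = (\<integral>\<^sup>+x. ennreal (f x) * (v x * indicator {-pi<..<pi} x) \<partial>lebesgue) + (\<integral>\<^sup>+x. ennreal (f x) * (u x * indicator {-pi<..<pi} x) \<partial>lebesgue)"
    by (subst nn_integral_add[symmetric, OF mv mu]) (simp add: distrib_left distrib_right)
  moreover have "(\<integral>\<^sup>+x. ennreal (a x) * (v x + u x) \<partial>count_space UNIV)
     = (\<integral>\<^sup>+x. ennreal (a x) * v x \<partial>count_space UNIV) + (\<integral>\<^sup>+x. ennreal (a x) * u x \<partial>count_space UNIV)"
    by (subst nn_integral_add[symmetric]) (simp_all add: distrib_left)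
  ultimately show ?case using add.IH by (simp add: ac_simps)
next
  case (seq U)
  have mU: "(\<lambda>x. ennreal (f x) * (U i x * indicator {-pi<..<pi} x)) \<in> borel_measurable lebesgue" for i
    using fm dam_meas_leb[OF seq(1)] by measurable
  have inc1: "incseq (\<lambda>i x. ennreal (f x) * (U i x * indicator {-pi<..<pi} x))"
    using \<open>incseq U\<close> by (auto simp: incseq_def le_fun_def intro!: mult_left_mono mult_right_mono)
  have inc2: "incseq (\<lambda>i x. ennreal (a x) * U i x)"
    using \<open>incseq U\<close> by (auto simp: incseq_def le_fun_def intro!: mult_left_mono)
  have "(\<integral>\<^sup>+x. (SUP i. U i) x \<partial>disc_ac_measure f a) = (SUP i. \<integral>\<^sup>+x. U i x \<partial>disc_ac_measure f a)"
    by (simp only: SUP_apply) (rule nn_integral_monotone_convergence_SUP[OF \<open>incseq U\<close> seq(1)])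
  also have "\<dots> = (SUP i. (\<integral>\<^sup>+x. ennreal (f x) * (U i x * indicator {-pi<..<pi} x) \<partial>lebesgue)
     + (\<integral>\<^sup>+x. ennreal (a x) * U i x \<partial>count_space UNIV))"
    using seq.IH by simp
  also have "\<dots> = (SUP i. (\<integral>\<^sup>+x. ennreal (f x) * (U i x * indicator {-pi<..<pi} x) \<partial>lebesgue))
     + (SUP i. (\<integral>\<^sup>+x. ennreal (a x) * U i x \<partial>count_space UNIV))"
    by (rule ennreal_SUP_add)
       (use inc1 inc2 in \<open>auto simp: incseq_def le_fun_def intro!: nn_integral_mono\<close>)
  also have "(SUP i. (\<integral>\<^sup>+x. ennreal (f x) * (U i x * indicator {-pi<..<pi} x) \<partial>lebesgue))
     = (\<integral>\<^sup>+x. (SUP i. ennreal (f x) * (U i x * indicator {-pi<..<pi} x)) \<partial>lebesgue)"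
    by (rule nn_integral_monotone_convergence_SUP[symmetric, OF inc1 mU])
  also have "(SUP i. (\<integral>\<^sup>+x. ennreal (a x) * U i x \<partial>count_space UNIV))
     = (\<integral>\<^sup>+x. (SUP i. ennreal (a x) * U i x) \<partial>count_space UNIV)"
    by (rule nn_integral_monotone_convergence_SUP[symmetric, OF inc2]) simp
  finally show ?case
    by (simp add: SUP_apply SUP_mult_left_ennreal SUP_mult_right_ennreal image_comp)
qed



lemma Gk_nonneg: "x \<in> {-pi..pi} \<Longrightarrow> y \<in> {-pi..pi} \<Longrightarrow> 0 \<le> Gk x y"
proof -
  assume x: "x \<in> {-pi..pi}" and y: "y \<in> {-pi..pi}"
  have "0 \<le> (pi + y) * (pi - x)" "0 \<le> (pi - y) * (pi + x)" using x y by auto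
  then have "0 \<le> pi * pi - x * y - pi * \<bar>x - y\<bar>" by (cases "x \<le> y") (auto simp: algebra_simps abs_if)
  then show ?thesis unfolding Gk_def using pi_gt_zero by (simp add: field_simps)
qed

lemma Gk_le: "x \<in> {-pi..pi} \<Longrightarrow> y \<in> {-pi..pi} \<Longrightarrow> Gk x y \<le> pi"
proof -
  assume x: "x \<in> {-pi..pi}" and y: "y \<in> {-pi..pi}"
  have "\<bar>x * y\<bar> \<le> pi * pi" using x y by (auto simp: abs_mult intro!: mult_mono)
  then have "- (x * y) \<le> pi * pi" by linarith
  then have "-(x*y)/(2*pi) \<le> (pi*pi)/(2*pi)" by (intro divide_right_mono) auto
  also have "(pi*pi)/(2*pi) = pi/2" by simp
  finally have h: "-(x*y)/(2*pi) \<le> pi/2" .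
  have "0 \<le> \<bar>x - y\<bar> / 2" by simp
  then show ?thesis unfolding Gk_def using h by linarith
qed

lemma Gk_pi[simp]: "Gk z pi = 0" "Gk z (-pi) = 0" if "z \<in> {-pi..pi}"
  using that pi_gt_zero unfolding Gk_def by (auto simp: field_simps abs_if)

lemma Gk_cont: "continuous_on UNIV (Gk z)"
  unfolding Gk_def by (intro continuous_intros) auto

lemma Gk_meas[measurable]: "Gk z \<in> borel_measurable borel"
  using Gk_cont by (simp add: borel_measurable_continuous_onI)

lemma dam_eq:
  assumes "AE y in lebesgue. y \<in> {-pi<..<pi} \<longrightarrow> f y = g y"
  shows "disc_ac_measure f a = disc_ac_measure g a"
  unfolding disc_ac_measure_def
proof (rule measure_of_eq)
  show sub: "sets (restrict_space borel {-pi<..<pi}) \<subseteq> Pow {-pi<..<pi}"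
    using sets.space_closed[of "restrict_space borel {-pi<..<pi}"] by (simp add: space_restrict_space)
  fix A assume "A \<in> sigma_sets {-pi<..<pi} (sets (restrict_space borel {-pi<..<pi}))"
  then have A: "A \<subseteq> {-pi<..<pi}" using sigma_sets_into_sp[OF sub] by blast
  have "(\<integral>\<^sup>+ x. ennreal (f x) * indicator A x \<partial>lebesgue) = (\<integral>\<^sup>+ x. ennreal (g x) * indicator A x \<partial>lebesgue)"
  proof (rule nn_integral_cong_AE)
    show "AE x in lebesgue. ennreal (f x) * indicator A x = ennreal (g x) * indicator A x"
      using assms by eventually_elim (use A in \<open>auto simp: indicator_def\<close>)
  qed
  then show "(\<integral>\<^sup>+ x. ennreal (f x) * indicator A x \<partial>lebesgue) + (\<integral>\<^sup>+ x. ennreal (a x) * indicator A x \<partial>count_space UNIV) =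
         (\<integral>\<^sup>+ x. ennreal (g x) * indicator A x \<partial>lebesgue) + (\<integral>\<^sup>+ x. ennreal (a x) * indicator A x \<partial>count_space UNIV)"
    by simp
qed

lemma summable_integrable_count:
  fixes a :: "real \<Rightarrow> real"
  assumes "a summable_on UNIV" "\<And>x. 0 \<le> a x"
  shows "integrable (count_space UNIV) a"
proof -
  have "(\<lambda>x. norm (a x)) summable_on UNIV" using assms by simp
  then have "Infinite_Sum.abs_summable_on a UNIV" by simp
  then show ?thesis using abs_summable_equivalent abs_summable_on_def by blast
qed

lemma integral_count_infsum:
  fixes g :: "real \<Rightarrow> real"
  assumes "integrable (count_space UNIV) g"
  shows "integral\<^sup>L (count_space UNIV) g = (\<Sum>\<^sub>\<infinity>y. g y)"
  using assms infsetsum_infsum[of g UNIV] by (simp add: infsetsum_def abs_summable_on_def)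

lemma u_formula:
  fixes f a :: "real \<Rightarrow> real"
  assumes f_nonneg: "\<And>x. 0 \<le> f x"
    and f_int: "integrable lebesgue (\<lambda>x. indicator {-pi..pi} x * f x)"
    and a_nonneg: "\<And>x. 0 \<le> a x"
    and a_supp: "\<And>x. x \<notin> {-pi<..<pi} \<Longrightarrow> a x = 0"
    and a_sum: "a summable_on UNIV"
    and z: "z \<in> {-pi..pi}"
  shows "u_meas (disc_ac_measure f a) z =
     (\<integral>y. indicator {-pi..pi} y * f y * Gk z y \<partial>lebesgue) + (\<Sum>\<^sub>\<infinity>y. a y * Gk z y)"
proof -
  define f0 where "f0 = (\<lambda>x. indicator {-pi..pi} x * f x)"
  have f0m: "f0 \<in> borel_measurable lebesgue" using f_int unfolding f0_def by (rule borel_measurable_integrable)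
  have f0n: "0 \<le> f0 x" for x unfolding f0_def using f_nonneg by simp
  have M: "disc_ac_measure f a = disc_ac_measure f0 a"
    by (rule dam_eq) (auto simp: f0_def)
  let ?M = "disc_ac_measure f0 a"
  have gm: "Gk z \<in> borel_measurable ?M"
  proof -
    have "Gk z \<in> borel_measurable (restrict_space borel {-pi<..<pi})"
      by (rule measurable_restrict_space1) simp
    then show ?thesis using measurable_cong_sets[OF dam_sets refl] by blast
  qed
  have "u_meas ?M z = enn2real (\<integral>\<^sup>+ y. ennreal (Gk z y) \<partial>?M)"
    unfolding u_meas_def
    by (rule integral_eq_nn_integral[OF gm]) (use z in \<open>auto simp: dam_space intro!: Gk_nonneg\<close>)
  also have "(\<integral>\<^sup>+ y. ennreal (Gk z y) \<partial>?M) =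
     (\<integral>\<^sup>+x. ennreal (f0 x) * (ennreal (Gk z x) * indicator {-pi<..<pi} x) \<partial>lebesgue)
   + (\<integral>\<^sup>+x. ennreal (a x) * ennreal (Gk z x) \<partial>count_space UNIV)"
    by (rule dam_nn_integral[OF f0m a_supp]) (use gm in measurable)
  also have "(\<integral>\<^sup>+x. ennreal (f0 x) * (ennreal (Gk z x) * indicator {-pi<..<pi} x) \<partial>lebesgue)
      = (\<integral>\<^sup>+x. ennreal (f0 x * Gk z x) \<partial>lebesgue)"
  proof (rule nn_integral_cong)
    fix x
    show "ennreal (f0 x) * (ennreal (Gk z x) * indicator {-pi<..<pi} x) = ennreal (f0 x * Gk z x)"
    proof (cases "x \<in> {-pi<..<pi}")
      case True then show ?thesis using f0n[of x] Gk_nonneg[OF z, of x] by (simp add: ennreal_mult)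
    next
      case False
      then have "x \<notin> {-pi..pi} \<or> x = pi \<or> x = -pi" by auto
      then have h: "f0 x * Gk z x = 0" using z by (auto simp: f0_def)
      show ?thesis by (subst h) (use False in simp)
    qed
  qed
  also have "\<dots> = ennreal (\<integral>x. f0 x * Gk z x \<partial>lebesgue)"
  proof (rule nn_integral_eq_integral)
    have b: "\<bar>f0 x * Gk z x\<bar> \<le> pi * f0 x" for x
    proof (cases "x \<in> {-pi..pi}")
      case True
      have "f0 x * Gk z x \<le> f0 x * pi" by (rule mult_left_mono) (use f0n[of x] Gk_le[OF z True] in auto)
      then show ?thesis
        using f0n[of x] Gk_nonneg[OF z True] by (simp add: abs_mult mult.commute)
    next
      case False then show ?thesis by (simp add: f0_def)
    qed
    have Gl: "Gk z \<in> borel_measurable lebesgue"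
      using measurable_completion measurable_lborel2 Gk_meas by blast
    have pm: "(\<lambda>x. f0 x * Gk z x) \<in> borel_measurable lebesgue"
      by (intro borel_measurable_times f0m Gl)
    show "integrable lebesgue (\<lambda>x. f0 x * Gk z x)"
      by (rule Bochner_Integration.integrable_bound[where f="\<lambda>x. pi * f0 x"])
         (use f_int b f0n pm in \<open>auto simp: f0_def intro!: AE_I2\<close>)
    show "AE x in lebesgue. 0 \<le> f0 x * Gk z x"
    proof (rule AE_I2)
      fix x show "0 \<le> f0 x * Gk z x"
        by (cases "x \<in> {-pi..pi}") (use f0n[of x] Gk_nonneg[OF z, of x] in \<open>auto simp: f0_def\<close>)
    qed
  qed
  also have "(\<integral>\<^sup>+x. ennreal (a x) * ennreal (Gk z x) \<partial>count_space UNIV)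
     = (\<integral>\<^sup>+x. ennreal (a x * Gk z x) \<partial>count_space UNIV)"
  proof (rule nn_integral_cong)
    fix x show "ennreal (a x) * ennreal (Gk z x) = ennreal (a x * Gk z x)"
      by (cases "x \<in> {-pi<..<pi}") (use a_supp a_nonneg[of x] Gk_nonneg[OF z, of x] in \<open>auto simp: ennreal_mult\<close>)
  qed
  also have "\<dots> = ennreal (integral\<^sup>L (count_space UNIV) (\<lambda>x. a x * Gk z x))"
  proof (rule nn_integral_eq_integral)
    have ai: "integrable (count_space UNIV) a" by (rule summable_integrable_count[OF a_sum a_nonneg])
    have b: "norm (a x * Gk z x) \<le> norm (pi * a x)" for x
    proof (cases "x \<in> {-pi<..<pi}")
      case True
      have "a x * Gk z x \<le> a x * pi" by (rule mult_left_mono) (use a_nonneg[of x] Gk_le[OF z, of x] True in auto)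
      then show ?thesis
        using a_nonneg[of x] Gk_nonneg[OF z, of x] True by (simp add: abs_mult mult.commute)
    next
      case False then show ?thesis using a_supp by simp
    qed
    show "integrable (count_space UNIV) (\<lambda>x. a x * Gk z x)"
      by (rule Bochner_Integration.integrable_bound[where f="\<lambda>x. pi * a x"]) (use ai b in auto)
    show "AE x in count_space UNIV. 0 \<le> a x * Gk z x"
    proof (rule AE_I2)
      fix x show "0 \<le> a x * Gk z x"
        by (cases "x \<in> {-pi<..<pi}") (use a_supp a_nonneg[of x] Gk_nonneg[OF z, of x] in auto)
    qed
    note this
  qed
  finally have e: "u_meas ?M z = enn2real (ennreal (\<integral>x. f0 x * Gk z x \<partial>lebesgue)
      + ennreal (integral\<^sup>L (count_space UNIV) (\<lambda>x. a x * Gk z x)))" .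
  have n1: "0 \<le> (\<integral>x. f0 x * Gk z x \<partial>lebesgue)"
  proof (rule integral_nonneg_AE, rule AE_I2)
    fix x show "0 \<le> f0 x * Gk z x"
      by (cases "x \<in> {-pi..pi}") (use f0n[of x] Gk_nonneg[OF z, of x] in \<open>auto simp: f0_def\<close>)
  qed
  have n2: "0 \<le> integral\<^sup>L (count_space UNIV) (\<lambda>x. a x * Gk z x)"
  proof (rule integral_nonneg_AE, rule AE_I2)
    fix x show "0 \<le> a x * Gk z x"
      by (cases "x \<in> {-pi<..<pi}") (use a_supp a_nonneg[of x] Gk_nonneg[OF z, of x] in auto)
  qed
  have ai: "integrable (count_space UNIV) a" by (rule summable_integrable_count[OF a_sum a_nonneg])
  have b: "norm (a x * Gk z x) \<le> norm (pi * a x)" for x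
  proof (cases "x \<in> {-pi<..<pi}")
    case True
    have "a x * Gk z x \<le> a x * pi" by (rule mult_left_mono) (use a_nonneg[of x] Gk_le[OF z, of x] True in auto)
    then show ?thesis
      using a_nonneg[of x] Gk_nonneg[OF z, of x] True by (simp add: abs_mult mult.commute)
  next
    case False then show ?thesis using a_supp by simp
  qed
  have "integrable (count_space UNIV) (\<lambda>x. a x * Gk z x)"
    by (rule Bochner_Integration.integrable_bound[where f="\<lambda>x. pi * a x"]) (use ai b in auto)
  then have e2: "integral\<^sup>L (count_space UNIV) (\<lambda>x. a x * Gk z x) = (\<Sum>\<^sub>\<infinity>y. a y * Gk z y)"
    by (rule integral_count_infsum)
  show ?thesis using e n1 n2 unfolding M e2[symmetric] by (simp add: f0_def flip: ennreal_plus)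
qed



definition Ef :: "real \<Rightarrow> (real\<Rightarrow>real) \<Rightarrow> (real\<Rightarrow>real) \<Rightarrow> (real\<Rightarrow>real) \<Rightarrow> real \<Rightarrow> real" where
  "Ef b h k kH y = polar b h y * kH y - h y * k y"

definition KM :: "(real\<Rightarrow>real) \<Rightarrow> (real\<Rightarrow>real) \<Rightarrow> real \<Rightarrow> real \<Rightarrow> bool" where
  "KM k kH y s \<longleftrightarrow> k y \<le> kH y \<and> k s \<le> kH y \<and> k y + k s \<le> kH y + kH s"

lemma km_core:
  fixes m m' k1 k2 K1 K2 :: real
  assumes "0 \<le> m" "0 \<le> m'" "k1 \<le> K1" "k2 \<le> K1" "k1 + k2 \<le> K1 + K2"
  shows "m * k1 + m' * k2 \<le> max m m' * K1 + min m m' * K2"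
proof (cases "m' \<le> m")
  case True
  have "0 \<le> (m - m') * (K1 - k1)" using True assms by simp
  moreover have "0 \<le> m' * (K1 + K2 - k1 - k2)" using assms by simp
  ultimately show ?thesis using True by (simp add: max_def min_def algebra_simps)
next
  case False
  have "0 \<le> (m' - m) * (K1 - k2)" using False assms by simp
  moreover have "0 \<le> m * (K1 + K2 - k1 - k2)" using assms by simp
  ultimately show ?thesis using False by (simp add: max_def min_def algebra_simps)
qed

lemma polar_vals_pos:
  assumes b: "0 < b" "b < pi"
  shows "y < 2*b - pi \<Longrightarrow> polar b h y = h y"
    and "2*b - pi \<le> y \<Longrightarrow> y \<le> b \<Longrightarrow> polar b h y = max (h y) (h (2*b - y))"
    and "b \<le> y \<Longrightarrow> polar b h y = min (h y) (h (2*b - y))"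
  using b unfolding polar_def by (auto simp: max_def min_def)

lemma polar_vals_neg:
  assumes b: "b < 0" "-pi < b"
  shows "2*b + pi < y \<Longrightarrow> polar b h y = h y"
    and "b \<le> y \<Longrightarrow> y \<le> 2*b + pi \<Longrightarrow> polar b h y = max (h y) (h (2*b - y))"
    and "y \<le> b \<Longrightarrow> polar b h y = min (h y) (h (2*b - y))"
  using b unfolding polar_def by (auto simp: max_def min_def)

lemma pair_sym: "Ef b h k kH (2*b - (2*b - y)) = Ef b h k kH y" by simp

lemma ptwise_pos:
  assumes b: "0 < b" "b < pi"
    and hn: "\<And>x. 0 \<le> h x" and hz: "\<And>x. x \<notin> {-pi..pi} \<Longrightarrow> h x = 0"
    and KF: "\<And>y. -pi \<le> y \<Longrightarrow> y < 2*b - pi \<Longrightarrow> k y \<le> kH y"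
    and KMa: "\<And>y. 2*b - pi \<le> y \<Longrightarrow> y \<le> b \<Longrightarrow> KM k kH y (2*b - y)"
  shows "0 \<le> Ef b h k kH y + Ef b h k kH (2*b - y)"
proof -
  have main: "0 \<le> Ef b h k kH y + Ef b h k kH (2*b - y)" if y: "y \<le> b" for y
  proof -
    consider "y < -pi" | "-pi \<le> y" "y < 2*b - pi" | "2*b - pi \<le> y" by linarith
    then show ?thesis
    proof cases
      case 1
      have "h y = 0" "h (2*b - y) = 0" using 1 b hz by auto
      moreover have "polar b h y = h y" using 1 b by (intro polar_vals_pos) auto
      moreover have "polar b h (2*b - y) = min (h (2*b-y)) (h y)" using 1 b by (subst polar_vals_pos(3)) auto
      ultimately show ?thesis by (simp add: Ef_def)
    next
      case 2
      have "h (2*b - y) = 0" using 2 b hz by auto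
      moreover have "polar b h y = h y" using 2 b by (intro polar_vals_pos) auto
      moreover have "polar b h (2*b - y) = min (h (2*b-y)) (h y)" using 2 b by (subst polar_vals_pos(3)) auto
      moreover have "0 \<le> h y * (kH y - k y)" using KF[OF 2] hn[of y] by simp
      ultimately show ?thesis using hn[of y] by (simp add: Ef_def algebra_simps)
    next
      case 3
      have p1: "polar b h y = max (h y) (h (2*b - y))" using 3 y b by (intro polar_vals_pos) auto
      have p2: "polar b h (2*b - y) = min (h y) (h (2*b - y))"
      proof (cases "y = b")
        case True then show ?thesis using b by (simp add: polar_def)
      next
        case False then show ?thesis using y b by (subst polar_vals_pos(3)) (auto simp: min.commute)
      qed
      have "h y * k y + h (2*b-y) * k (2*b-y) \<le> max (h y) (h (2*b - y)) * kH y + min (h y) (h (2*b - y)) * kH (2*b-y)"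
        by (rule km_core) (use hn KMa[OF 3 y] in \<open>auto simp: KM_def\<close>)
      then show ?thesis unfolding Ef_def p1 p2 by simp
    qed
  qed
  show ?thesis
  proof (cases "y \<le> b")
    case True then show ?thesis by (rule main)
  next
    case False
    then have "0 \<le> Ef b h k kH (2*b - y) + Ef b h k kH (2*b - (2*b - y))" by (intro main) auto
    then show ?thesis by simp
  qed
qed

lemma ptwise_neg:
  assumes b: "b < 0" "-pi < b"
    and hn: "\<And>x. 0 \<le> h x" and hz: "\<And>x. x \<notin> {-pi..pi} \<Longrightarrow> h x = 0"
    and KF: "\<And>y. 2*b + pi < y \<Longrightarrow> y \<le> pi \<Longrightarrow> k y \<le> kH y"
    and KMa: "\<And>y. b \<le> y \<Longrightarrow> y \<le> 2*b + pi \<Longrightarrow> KM k kH y (2*b - y)"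
  shows "0 \<le> Ef b h k kH y + Ef b h k kH (2*b - y)"
proof -
  have main: "0 \<le> Ef b h k kH y + Ef b h k kH (2*b - y)" if y: "b \<le> y" for y
  proof -
    consider "pi < y" | "2*b + pi < y" "y \<le> pi" | "y \<le> 2*b + pi" by linarith
    then show ?thesis
    proof cases
      case 1
      have "h y = 0" "h (2*b - y) = 0" using 1 b hz by auto
      moreover have "polar b h y = h y" using 1 b by (intro polar_vals_neg) auto
      moreover have "polar b h (2*b - y) = min (h (2*b-y)) (h y)" using 1 b by (subst polar_vals_neg(3)) auto
      ultimately show ?thesis by (simp add: Ef_def)
    next
      case 2
      have "h (2*b - y) = 0" using 2 b hz by auto
      moreover have "polar b h y = h y" using 2 b by (intro polar_vals_neg) auto
      moreover have "polar b h (2*b - y) = min (h (2*b-y)) (h y)" using 2 b by (subst polar_vals_neg(3)) auto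
      moreover have "0 \<le> h y * (kH y - k y)" using KF[OF 2] hn[of y] by simp
      ultimately show ?thesis using hn[of y] by (simp add: Ef_def algebra_simps)
    next
      case 3
      have p1: "polar b h y = max (h y) (h (2*b - y))" using 3 y b by (intro polar_vals_neg) auto
      have p2: "polar b h (2*b - y) = min (h y) (h (2*b - y))"
      proof (cases "y = b")
        case True then show ?thesis using b by (simp add: polar_def)
      next
        case False then show ?thesis using y b by (subst polar_vals_neg(3)) (auto simp: min.commute)
      qed
      have "h y * k y + h (2*b-y) * k (2*b-y) \<le> max (h y) (h (2*b - y)) * kH y + min (h y) (h (2*b - y)) * kH (2*b-y)"
        by (rule km_core) (use hn KMa[OF y 3] in \<open>auto simp: KM_def\<close>)
      then show ?thesis unfolding Ef_def p1 p2 by simp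
    qed
  qed
  show ?thesis
  proof (cases "b \<le> y")
    case True then show ?thesis by (rule main)
  next
    case False
    then have "0 \<le> Ef b h k kH (2*b - y) + Ef b h k kH (2*b - (2*b - y))" by (intro main) auto
    then show ?thesis by simp
  qed
qed

lemma eq_core:
  fixes m m' k1 k2 :: real
  assumes "k2 < k1" "max m m' * k1 + min m m' * k2 - m * k1 - m' * k2 = 0"
  shows "m' \<le> m"
proof (rule ccontr)
  assume "\<not> m' \<le> m"
  then have "0 < (m' - m) * (k1 - k2)" using assms by simp
  then show False using assms \<open>\<not> m' \<le> m\<close> by (simp add: max_def min_def algebra_simps)
qed

lemma ptwise_eq_pos:
  assumes b: "0 < b" "b < pi"
    and hn: "\<And>x. 0 \<le> h x" and hz: "\<And>x. x \<notin> {-pi..pi} \<Longrightarrow> h x = 0"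
    and st: "\<And>y. 2*b - pi \<le> y \<Longrightarrow> y < b \<Longrightarrow> k (2*b - y) < k y"
    and z: "Ef b h k k y + Ef b h k k (2*b - y) = 0"
  shows "polar b h y = h y"
proof -
  have key: "h (2*b - t) \<le> h t \<and> polar b h t = max (h t) (h (2*b - t)) \<and> polar b h (2*b - t) = min (h t) (h (2*b - t))"
    if t: "2*b - pi \<le> t" "t < b" and zt: "Ef b h k k t + Ef b h k k (2*b - t) = 0" for t
  proof -
    have p1: "polar b h t = max (h t) (h (2*b - t))" using t b by (intro polar_vals_pos) auto
    have p2: "polar b h (2*b - t) = min (h t) (h (2*b - t))" using t b by (subst polar_vals_pos(3)) (auto simp: min.commute)
    have "h (2*b - t) \<le> h t"
      by (rule eq_core[OF st[OF t]]) (use zt in \<open>unfold Ef_def p1 p2, linarith\<close>)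
    then show ?thesis using p1 p2 by simp
  qed
  consider "y < 2*b - pi" | "2*b - pi \<le> y" "y < b" | "y = b" | "b < y" "y \<le> pi" | "pi < y" by linarith
  then show ?thesis
  proof cases
    case 1 then show ?thesis using b by (intro polar_vals_pos) auto
  next
    case 2 then show ?thesis using key[OF 2 z] by simp
  next
    case 3 then show ?thesis using b by (simp add: polar_def)
  next
    case 4
    have "Ef b h k k (2*b - y) + Ef b h k k (2*b - (2*b - y)) = 0" using z by simp
    then have "h (2*b - (2*b - y)) \<le> h (2*b - y) \<and> polar b h (2*b - (2*b - y)) = min (h (2*b - y)) (h (2*b - (2*b - y)))"
      using key[of "2*b - y"] 4 by auto
    then show ?thesis by simp
  next
    case 5
    then have "h y = 0" using hz by auto
    moreover have "polar b h y = min (h y) (h (2*b - y))" using 5 b by (intro polar_vals_pos) auto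
    ultimately show ?thesis using hn[of "2*b-y"] by simp
  qed
qed

lemma ptwise_eq_neg:
  assumes b: "b < 0" "-pi < b"
    and hn: "\<And>x. 0 \<le> h x" and hz: "\<And>x. x \<notin> {-pi..pi} \<Longrightarrow> h x = 0"
    and st: "\<And>y. b < y \<Longrightarrow> y \<le> 2*b + pi \<Longrightarrow> k (2*b - y) < k y"
    and z: "Ef b h k k y + Ef b h k k (2*b - y) = 0"
  shows "polar b h y = h y"
proof -
  have key: "h (2*b - t) \<le> h t \<and> polar b h t = max (h t) (h (2*b - t)) \<and> polar b h (2*b - t) = min (h t) (h (2*b - t))"
    if t: "b < t" "t \<le> 2*b + pi" and zt: "Ef b h k k t + Ef b h k k (2*b - t) = 0" for t
  proof -
    have p1: "polar b h t = max (h t) (h (2*b - t))" using t b by (intro polar_vals_neg) auto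
    have p2: "polar b h (2*b - t) = min (h t) (h (2*b - t))" using t b by (subst polar_vals_neg(3)) (auto simp: min.commute)
    have "h (2*b - t) \<le> h t"
      by (rule eq_core[OF st[OF t]]) (use zt in \<open>unfold Ef_def p1 p2, linarith\<close>)
    then show ?thesis using p1 p2 by simp
  qed
  consider "2*b + pi < y" | "b < y" "y \<le> 2*b + pi" | "y = b" | "-pi \<le> y" "y < b" | "y < -pi" by linarith
  then show ?thesis
  proof cases
    case 1 then show ?thesis using b by (intro polar_vals_neg) auto
  next
    case 2 then show ?thesis using key[OF 2 z] by simp
  next
    case 3 then show ?thesis using b by (simp add: polar_def)
  next
    case 4
    have "Ef b h k k (2*b - y) + Ef b h k k (2*b - (2*b - y)) = 0" using z by simp
    then have "h (2*b - (2*b - y)) \<le> h (2*b - y) \<and> polar b h (2*b - (2*b - y)) = min (h (2*b - y)) (h (2*b - (2*b - y)))"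
      using key[of "2*b - y"] 4 by auto
    then show ?thesis by simp
  next
    case 5
    then have "h y = 0" using hz by auto
    moreover have "polar b h y = min (h y) (h (2*b - y))" using 5 b by (intro polar_vals_neg) auto
    ultimately show ?thesis using hn[of "2*b-y"] by simp
  qed
qed



lemma polar_nonneg: "(\<And>x. 0 \<le> h x) \<Longrightarrow> 0 \<le> polar b h y"
  unfolding polar_def by (auto simp: le_max_iff_disj)

lemma polar_le: "(\<And>x. 0 \<le> h x) \<Longrightarrow> polar b h y \<le> h y + h (2*b - y)"
  unfolding polar_def by (auto simp: add_increasing add_increasing2 min_le_iff_disj)

lemma polar_zero_closed:
  assumes b: "b \<in> {-pi<..<0} \<union> {0<..<pi}" and hn: "\<And>x. 0 \<le> h x"
    and hz: "\<And>x. x \<notin> {-pi..pi} \<Longrightarrow> h x = 0" and y: "y \<notin> {-pi..pi}"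
  shows "polar b h y = 0"
proof (cases "0 < b")
  case True
  show ?thesis
  proof (cases "y < -pi")
    case True1: True
    then show ?thesis using \<open>0<b\<close> b hz[of y] by (subst polar_vals_pos(1)) auto
  next
    case False
    then have "pi < y" using y by auto
    then show ?thesis using \<open>0<b\<close> b hz[of y] hn[of "2*b-y"] by (subst polar_vals_pos(3)) auto
  qed
next
  case False
  show ?thesis
  proof (cases "pi < y")
    case True
    then show ?thesis using \<open>\<not> 0<b\<close> b hz[of y] by (subst polar_vals_neg(1)) auto
  next
    case False
    then have "y < -pi" using y by auto
    then show ?thesis using \<open>\<not> 0<b\<close> b hz[of y] hn[of "2*b-y"] by (subst polar_vals_neg(3)) auto
  qed
qed

lemma polar_zero_open:
  assumes b: "b \<in> {-pi<..<0} \<union> {0<..<pi}" and hn: "\<And>x. 0 \<le> h x"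
    and hz: "\<And>x. x \<notin> {-pi<..<pi} \<Longrightarrow> h x = 0" and y: "y \<notin> {-pi<..<pi}"
  shows "polar b h y = 0"
proof (cases "0 < b")
  case True
  show ?thesis
  proof (cases "y \<le> -pi")
    case True1: True
    then show ?thesis using \<open>0<b\<close> b hz[of y] by (subst polar_vals_pos(1)) auto
  next
    case False
    then have "pi \<le> y" using y by auto
    then show ?thesis using \<open>0<b\<close> b hz[of y] hn[of "2*b-y"] by (subst polar_vals_pos(3)) auto
  qed
next
  case False
  show ?thesis
  proof (cases "pi \<le> y")
    case True
    then show ?thesis using \<open>\<not> 0<b\<close> b hz[of y] by (subst polar_vals_neg(1)) auto
  next
    case False
    then have "y \<le> -pi" using y by auto
    then show ?thesis using \<open>\<not> 0<b\<close> b hz[of y] hn[of "2*b-y"] by (subst polar_vals_neg(3)) auto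
  qed
qed

lemma polar_ind:
  assumes b: "b \<in> {-pi<..<0} \<union> {0<..<pi}" and fn: "\<And>x. 0 \<le> f x"
  shows "polar b (\<lambda>x. indicator {-pi..pi} x * f x) = (\<lambda>x. indicator {-pi..pi} x * polar b f x)"
proof
  fix y
  show "polar b (\<lambda>x. indicator {-pi..pi} x * f x) y = indicator {-pi..pi} y * polar b f y"
  proof (cases "y \<in> {-pi..pi}")
    case False
    then show ?thesis using polar_zero_closed[OF b, of "\<lambda>x. indicator {-pi..pi} x * f x" y] fn by auto
  next
    case True
    then show ?thesis using b unfolding polar_def by (auto simp: indicator_def)
  qed
qed

lemma refl_meas: "(h :: real \<Rightarrow> real) \<in> borel_measurable lebesgue \<Longrightarrow> (\<lambda>x. h (2*b - x)) \<in> borel_measurable lebesgue"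
  using borel_measurable_affine[of h "-1" "2*b"] by simp

lemma le_sets_leb: "{x \<in> space lebesgue. x \<le> (c::real)} \<in> sets lebesgue" "{x \<in> space lebesgue. x < (c::real)} \<in> sets lebesgue"
  by simp_all

lemma polar_meas:
  fixes h :: "real \<Rightarrow> real"
  assumes "h \<in> borel_measurable lebesgue"
  shows "polar b h \<in> borel_measurable lebesgue"
proof -
  have r: "(\<lambda>x. h (2*b - x)) \<in> borel_measurable lebesgue" using refl_meas[OF assms] .
  have m1: "(\<lambda>x. max (h x) (h (2*b - x))) \<in> borel_measurable lebesgue" by (intro borel_measurable_max assms r)
  have m2: "(\<lambda>x. min (h x) (h (2*b - x))) \<in> borel_measurable lebesgue" by (intro borel_measurable_min assms r)
  show ?thesis
  proof (cases "0 < b")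
    case True
    have "polar b h = (\<lambda>x. if x < 2 * b - pi then h x else if x \<le> b then max (h x) (h (2 * b - x)) else min (h x) (h (2 * b - x)))"
      using True by (simp add: polar_def[abs_def])
    also have "\<dots> \<in> borel_measurable lebesgue"
      by (intro measurable_If assms m1 m2 le_sets_leb)
    finally show ?thesis .
  next
    case False
    have "polar b h = (\<lambda>x. if x \<le> b then min (h x) (h (2 * b - x)) else if x \<le> 2 * b + pi then max (h x) (h (2 * b - x)) else h x)"
      using False by (simp add: polar_def[abs_def])
    also have "\<dots> \<in> borel_measurable lebesgue"
      by (intro measurable_If assms m1 m2 le_sets_leb)
    finally show ?thesis .
  qed
qed

lemma sym_int:
  fixes h k kH :: "real \<Rightarrow> real"
  assumes b: "b \<in> {-pi<..<0} \<union> {0<..<pi}"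
    and hi: "integrable lebesgue h" and hn: "\<And>x. 0 \<le> h x" and hz: "\<And>x. x \<notin> {-pi..pi} \<Longrightarrow> h x = 0"
    and km: "k \<in> borel_measurable borel" "kH \<in> borel_measurable borel"
    and kb: "\<And>y. y \<in> {-pi..pi} \<Longrightarrow> \<bar>k y\<bar> \<le> C" "\<And>y. y \<in> {-pi..pi} \<Longrightarrow> \<bar>kH y\<bar> \<le> C"
    and P: "\<And>y. 0 \<le> Ef b h k kH y + Ef b h k kH (2*b - y)"
  shows "(\<integral>y. h y * k y \<partial>lebesgue) \<le> (\<integral>y. polar b h y * kH y \<partial>lebesgue)"
    and "(\<integral>y. h y * k y \<partial>lebesgue) = (\<integral>y. polar b h y * kH y \<partial>lebesgue) \<Longrightarrow>
         AE y in lebesgue. Ef b h k kH y + Ef b h k kH (2*b - y) = 0"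
proof -
  define E where "E = Ef b h k kH"
  have hm: "h \<in> borel_measurable lebesgue" using hi by (rule borel_measurable_integrable)
  have kml: "k \<in> borel_measurable lebesgue" "kH \<in> borel_measurable lebesgue"
    using km measurable_completion measurable_lborel2 by blast+
  have ri: "integrable lebesgue (\<lambda>x. h (2*b - x))"
    using lebesgue_integrable_real_affine[OF hi, of "-1" "2*b"] by simp
  have phn: "0 \<le> polar b h x" for x using polar_nonneg[OF hn] .
  have phz: "x \<notin> {-pi..pi} \<Longrightarrow> polar b h x = 0" for x using polar_zero_closed[OF b hn hz] .
  have phi: "integrable lebesgue (polar b h)"
  proof (rule Bochner_Integration.integrable_bound[where f="\<lambda>x. h x + h (2*b - x)"])
    show "integrable lebesgue (\<lambda>x. h x + h (2*b - x))" using hi ri by (rule Bochner_Integration.integrable_add)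
    show "polar b h \<in> borel_measurable lebesgue" using polar_meas[OF hm] .
    show "AE x in lebesgue. norm (polar b h x) \<le> norm (h x + h (2 * b - x))"
      using polar_le[OF hn] phn hn by (auto intro!: AE_I2 simp: add_nonneg_nonneg)
  qed
  have prodint: "integrable lebesgue (\<lambda>x. g x * kk x)"
    if gi: "integrable lebesgue g" and gn: "\<And>x. 0 \<le> g x" and gz: "\<And>x. x \<notin> {-pi..pi} \<Longrightarrow> g x = 0"
      and kkm: "kk \<in> borel_measurable lebesgue" and kkb: "\<And>y. y \<in> {-pi..pi} \<Longrightarrow> \<bar>kk y\<bar> \<le> C" for g kk
  proof (rule Bochner_Integration.integrable_bound[where f="\<lambda>x. C * g x"])
    show "integrable lebesgue (\<lambda>x. C * g x)" using gi by simp
    show "(\<lambda>x. g x * kk x) \<in> borel_measurable lebesgue"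
      using borel_measurable_integrable[OF gi] kkm by (rule borel_measurable_times)
    show "AE x in lebesgue. norm (g x * kk x) \<le> norm (C * g x)"
    proof (rule AE_I2)
      fix x show "norm (g x * kk x) \<le> norm (C * g x)"
      proof (cases "x \<in> {-pi..pi}")
        case True
        have "g x * \<bar>kk x\<bar> \<le> g x * \<bar>C\<bar>" using kkb[OF True] gn[of x] by (intro mult_left_mono) auto
        then show ?thesis using gn[of x] by (simp add: abs_mult mult.commute)
      next
        case False then show ?thesis using gz by simp
      qed
    qed
  qed
  have i1: "integrable lebesgue (\<lambda>x. h x * k x)" using prodint[OF hi hn hz kml(1) kb(1)] .
  have i2: "integrable lebesgue (\<lambda>x. polar b h x * kH x)" using prodint[OF phi phn phz kml(2) kb(2)] .
  have Eeq: "E = (\<lambda>x. polar b h x * kH x - h x * k x)" unfolding E_def Ef_def by auto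
  have Ei: "integrable lebesgue E" unfolding Eeq using i2 i1 by (rule Bochner_Integration.integrable_diff)
  have Esi: "integrable lebesgue (\<lambda>x. E (2*b - x))"
    using lebesgue_integrable_real_affine[OF Ei, of "-1" "2*b"] by simp
  have refl: "(\<integral>x. E (2*b - x) \<partial>lebesgue) = (\<integral>x. E x \<partial>lebesgue)"
    using lebesgue_integral_real_affine[of "-1" E "2*b"] by simp
  have sum: "(\<integral>x. E x + E (2*b - x) \<partial>lebesgue) = 2 * (\<integral>x. E x \<partial>lebesgue)"
    using Bochner_Integration.integral_add[OF Ei Esi] refl by simp
  have Pn: "AE x in lebesgue. 0 \<le> E x + E (2*b - x)" using P unfolding E_def by (auto intro!: AE_I2)
  have nn: "0 \<le> (\<integral>x. E x \<partial>lebesgue)"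
    using integral_nonneg_AE[OF Pn] sum by simp
  have split: "(\<integral>y. polar b h y * kH y \<partial>lebesgue) = (\<integral>y. h y * k y \<partial>lebesgue) + (\<integral>x. E x \<partial>lebesgue)"
  proof -
    have "(\<integral>y. polar b h y * kH y \<partial>lebesgue) = (\<integral>y. h y * k y + E y \<partial>lebesgue)"
      unfolding Eeq by simp
    also have "\<dots> = (\<integral>y. h y * k y \<partial>lebesgue) + (\<integral>x. E x \<partial>lebesgue)"
      by (rule Bochner_Integration.integral_add[OF i1 Ei])
    finally show ?thesis .
  qed
  show "(\<integral>y. h y * k y \<partial>lebesgue) \<le> (\<integral>y. polar b h y * kH y \<partial>lebesgue)"
    using split nn by simp
  assume eq: "(\<integral>y. h y * k y \<partial>lebesgue) = (\<integral>y. polar b h y * kH y \<partial>lebesgue)"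
  then have "(\<integral>x. E x + E (2*b - x) \<partial>lebesgue) = 0" using split sum by simp
  then have "AE x in lebesgue. E x + E (2*b - x) = 0"
    using integral_nonneg_eq_0_iff_AE[OF Bochner_Integration.integrable_add[OF Ei Esi] Pn] by simp
  then show "AE y in lebesgue. Ef b h k kH y + Ef b h k kH (2*b - y) = 0" unfolding E_def .
qed



lemma bij_refl: "bij_betw (\<lambda>x::real. 2*b - x) UNIV UNIV"
  by (rule bij_betw_byWitness[where f'="\<lambda>x. 2*b - x"]) auto

lemma summable_by_bound:
  fixes e g :: "real \<Rightarrow> real"
  assumes "g summable_on UNIV" "\<And>x. \<bar>e x\<bar> \<le> g x"
  shows "e summable_on UNIV"
proof -
  have "(\<lambda>x. norm (e x)) summable_on UNIV"
  proof (rule summable_on_comparison_test[OF assms(1)])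
    fix x show "norm (e x) \<le> g x" using assms(2)[of x] by simp
    show "0 \<le> norm (e x)" by simp
  qed
  then show ?thesis by (rule abs_summable_summable)
qed

lemma sym_sum:
  fixes c k kH :: "real \<Rightarrow> real"
  assumes b: "b \<in> {-pi<..<0} \<union> {0<..<pi}"
    and cs: "c summable_on UNIV" and cn: "\<And>x. 0 \<le> c x" and cz: "\<And>x. x \<notin> {-pi..pi} \<Longrightarrow> c x = 0"
    and kb: "\<And>y. y \<in> {-pi..pi} \<Longrightarrow> \<bar>k y\<bar> \<le> C" "\<And>y. y \<in> {-pi..pi} \<Longrightarrow> \<bar>kH y\<bar> \<le> C"
    and P: "\<And>y. 0 \<le> Ef b c k kH y + Ef b c k kH (2*b - y)"
  shows "(\<Sum>\<^sub>\<infinity>y. c y * k y) \<le> (\<Sum>\<^sub>\<infinity>y. polar b c y * kH y)"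
    and "(\<Sum>\<^sub>\<infinity>y. c y * k y) = (\<Sum>\<^sub>\<infinity>y. polar b c y * kH y) \<Longrightarrow>
         (\<forall>y. Ef b c k kH y + Ef b c k kH (2*b - y) = 0)"
proof -
  define E where "E = Ef b c k kH"
  have rs: "(\<lambda>x. c (2*b - x)) summable_on UNIV"
    using summable_on_reindex_bij_betw[OF bij_refl[of b], of c] cs by simp
  have phn: "0 \<le> polar b c x" for x using polar_nonneg[OF cn] .
  have phz: "x \<notin> {-pi..pi} \<Longrightarrow> polar b c x = 0" for x using polar_zero_closed[OF b cn cz] .
  have phs: "polar b c summable_on UNIV"
  proof (rule summable_on_comparison_test[where f="\<lambda>x. c x + c (2*b - x)"])
    show "(\<lambda>x. c x + c (2*b - x)) summable_on UNIV" using cs rs by (rule summable_on_add)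
    show "polar b c x \<le> c x + c (2*b - x)" for x using polar_le[OF cn] .
    show "0 \<le> polar b c x" for x using phn .
  qed
  have bnd: "\<bar>g * kk\<bar> \<le> \<bar>C\<bar> * g"
    if "0 \<le> g" "x \<notin> {-pi..pi} \<Longrightarrow> g = 0" "x \<in> {-pi..pi} \<Longrightarrow> \<bar>kk\<bar> \<le> C" for g kk x
  proof (cases "x \<in> {-pi..pi}")
    case True
    have "g * \<bar>kk\<bar> \<le> g * \<bar>C\<bar>" using that True by (intro mult_left_mono) auto
    then show ?thesis using that by (simp add: abs_mult mult.commute)
  next
    case False then show ?thesis using that by simp
  qed
  have b1: "\<bar>c x * k x\<bar> \<le> \<bar>C\<bar> * c x" for x by (rule bnd[of _ x]) (use cn cz kb in auto)
  have b2: "\<bar>polar b c x * kH x\<bar> \<le> \<bar>C\<bar> * polar b c x" for x by (rule bnd[of _ x]) (use phn phz kb in auto)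
  have i1: "(\<lambda>x. c x * k x) summable_on UNIV"
    by (rule summable_by_bound[OF summable_on_cmult_right[OF cs, of "\<bar>C\<bar>"]]) (rule b1)
  have i2: "(\<lambda>x. polar b c x * kH x) summable_on UNIV"
    by (rule summable_by_bound[OF summable_on_cmult_right[OF phs, of "\<bar>C\<bar>"]]) (rule b2)
  have Eeq: "E = (\<lambda>x. polar b c x * kH x - c x * k x)" unfolding E_def Ef_def by auto
  have Ei: "E summable_on UNIV"
  proof (rule summable_by_bound[where g="\<lambda>x. \<bar>C\<bar> * polar b c x + \<bar>C\<bar> * c x"])
    show "(\<lambda>x. \<bar>C\<bar> * polar b c x + \<bar>C\<bar> * c x) summable_on UNIV"
      by (rule summable_on_add; rule summable_on_cmult_right) (fact phs, fact cs)
    fix x show "\<bar>E x\<bar> \<le> \<bar>C\<bar> * polar b c x + \<bar>C\<bar> * c x"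
      using b1[of x] b2[of x] unfolding Eeq by linarith
  qed
  have Esi: "(\<lambda>x. E (2*b - x)) summable_on UNIV"
    using summable_on_reindex_bij_betw[OF bij_refl[of b], of E] Ei by simp
  have refl: "(\<Sum>\<^sub>\<infinity>x. E (2*b - x)) = (\<Sum>\<^sub>\<infinity>x. E x)"
    using infsum_reindex_bij_betw[OF bij_refl[of b], of E] by simp
  have sum: "(\<Sum>\<^sub>\<infinity>x. E x + E (2*b - x)) = 2 * (\<Sum>\<^sub>\<infinity>x. E x)"
    using infsum_add[OF Ei Esi] refl by simp
  have Pn: "\<And>x. 0 \<le> E x + E (2*b - x)" using P unfolding E_def by auto
  have nn: "0 \<le> (\<Sum>\<^sub>\<infinity>x. E x)"
    using infsum_nonneg[where M=UNIV and f="\<lambda>x. E x + E (2*b - x)"] Pn sum by simp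
  have split: "(\<Sum>\<^sub>\<infinity>y. polar b c y * kH y) = (\<Sum>\<^sub>\<infinity>y. c y * k y) + (\<Sum>\<^sub>\<infinity>x. E x)"
  proof -
    have "(\<Sum>\<^sub>\<infinity>y. polar b c y * kH y) = (\<Sum>\<^sub>\<infinity>y. c y * k y + E y)"
      unfolding Eeq by simp
    also have "\<dots> = (\<Sum>\<^sub>\<infinity>y. c y * k y) + (\<Sum>\<^sub>\<infinity>x. E x)"
      by (rule infsum_add[OF i1 Ei])
    finally show ?thesis .
  qed
  show "(\<Sum>\<^sub>\<infinity>y. c y * k y) \<le> (\<Sum>\<^sub>\<infinity>y. polar b c y * kH y)"
    using split nn by simp
  assume eq: "(\<Sum>\<^sub>\<infinity>y. c y * k y) = (\<Sum>\<^sub>\<infinity>y. polar b c y * kH y)"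
  then have z: "(\<Sum>\<^sub>\<infinity>x. E x + E (2*b - x)) = 0" using split sum by simp
  have ss: "(\<lambda>x. E x + E (2*b - x)) summable_on UNIV" by (rule summable_on_add[OF Ei Esi])
  have z': "(\<Sum>\<^sub>\<infinity>x. E x + E (2*b - x)) \<le> 0" using z by simp
  have "E y + E (2*b - y) = 0" for y
    using nonneg_infsum_le_0D[OF z' ss Pn] by simp
  then show "\<forall>y. Ef b c k kH y + Ef b c k kH (2*b - y) = 0" unfolding E_def by blast
qed



definition PP :: "real \<Rightarrow> real \<Rightarrow> real" where "PP x y = -(x*y) - pi*\<bar>x-y\<bar>"

lemma Gk_PP: "Gk x y = (pi*pi + PP x y) / (2*pi)"
  unfolding Gk_def PP_def using pi_gt_zero by (simp add: field_simps)

lemma Gk_le_iff: "Gk x y \<le> Gk u v \<longleftrightarrow> PP x y \<le> PP u v"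
  unfolding Gk_PP using pi_gt_zero by (simp add: divide_le_cancel)

lemma Gk_less_iff: "Gk x y < Gk u v \<longleftrightarrow> PP x y < PP u v"
  unfolding Gk_PP using pi_gt_zero by (simp add: divide_less_cancel)

lemma Gk_sum_le_iff: "Gk x y + Gk x' y' \<le> Gk u v + Gk u' v' \<longleftrightarrow> PP x y + PP x' y' \<le> PP u v + PP u' v'"
proof -
  have "Gk x y + Gk x' y' = (2*pi*pi + (PP x y + PP x' y')) / (2*pi)"
       "Gk u v + Gk u' v' = (2*pi*pi + (PP u v + PP u' v')) / (2*pi)"
    unfolding Gk_PP using pi_gt_zero by (simp_all add: field_simps)
  then show ?thesis using pi_gt_zero by (simp add: divide_le_cancel)
qed

lemma Gk_neg: "Gk (-x) (-y) = Gk x y"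
  unfolding Gk_def by (simp add: abs_minus_commute)

lemma H1: fixes L R p1 p2 q r :: real
  shows "R - L = 2*p1 + 2*p2 \<Longrightarrow> q \<le> p1 \<Longrightarrow> q + p2 = r \<Longrightarrow> 0 \<le> r \<Longrightarrow> L \<le> R"
  by linarith

lemma H1s: fixes L R p1 p2 q r :: real
  shows "R - L = 2*p1 + 2*p2 \<Longrightarrow> q \<le> p1 \<Longrightarrow> q + p2 = r \<Longrightarrow> 0 < r \<Longrightarrow> L < R"
  by linarith

lemma K1: fixes z y b :: real assumes "-pi \<le> z" "z \<le> b" "2*b - pi \<le> y" "y \<le> b" "0<b" "b<pi"
  shows "Gk z (2*b-y) \<le> Gk z y"
  unfolding Gk_le_iff PP_def
proof -
  have a1: "\<bar>z-(2*b-y)\<bar> = 2*b - z - y" using assms by auto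
  show "-(z*(2*b-y)) - pi*\<bar>z-(2*b-y)\<bar> \<le> -(z*y) - pi*\<bar>z-y\<bar>"
  proof (cases "z \<le> y")
    case True
    have a2: "\<bar>z-y\<bar> = y - z" using True by simp
    have F: "0 \<le> (b - y) * (z + pi)" using assms by simp
    have e: "(-(z*y) - pi*(y - z)) - (-(z*(2*b-y)) - pi*(2*b - z - y)) = 2*((b - y) * (z + pi))"
      by (simp add: algebra_simps)
    show ?thesis unfolding a1 a2 using e F by linarith
  next
    case False
    have a2: "\<bar>z-y\<bar> = z - y" using False by simp
    have F1: "z*pi \<le> z*(b-y)" if "z < 0" using that assms by (intro mult_left_mono_neg) auto
    have F2: "0 \<le> z*(b-y)" if "0 \<le> z" using that assms by simp
    have F3: "0 \<le> pi*(b-z)" "0 \<le> pi*b" using assms by auto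
    have e: "(-(z*y) - pi*(z - y)) - (-(z*(2*b-y)) - pi*(2*b - z - y)) = 2*(z*(b-y)) + 2*(pi*(b-z))"
      by (simp add: algebra_simps)
    have e2: "z*pi + pi*(b-z) = pi*b" by (simp add: algebra_simps)
    show ?thesis
    proof (cases "z < 0")
      case True show ?thesis unfolding a1 a2 by (rule H1[OF e F1[OF True] e2 F3(2)])
    next
      case False then show ?thesis unfolding a1 a2 using e F2 F3 by simp
    qed
  qed
qed

lemma K1s: fixes z y b :: real assumes "-pi < z" "z \<le> b" "2*b - pi \<le> y" "y < b" "0<b" "b<pi"
  shows "Gk z (2*b-y) < Gk z y"
  unfolding Gk_less_iff PP_def
proof -
  have a1: "\<bar>z-(2*b-y)\<bar> = 2*b - z - y" using assms by auto
  show "-(z*(2*b-y)) - pi*\<bar>z-(2*b-y)\<bar> < -(z*y) - pi*\<bar>z-y\<bar>"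
  proof (cases "z \<le> y")
    case True
    have a2: "\<bar>z-y\<bar> = y - z" using True by simp
    have F: "0 < (b - y) * (z + pi)" using assms by simp
    have e: "(-(z*y) - pi*(y - z)) - (-(z*(2*b-y)) - pi*(2*b - z - y)) = 2*((b - y) * (z + pi))"
      by (simp add: algebra_simps)
    show ?thesis unfolding a1 a2 using e F by linarith
  next
    case False
    have a2: "\<bar>z-y\<bar> = z - y" using False by simp
    have F1: "z*pi \<le> z*(b-y)" if "z < 0" using that assms by (intro mult_left_mono_neg) auto
    have F2: "0 \<le> z*(b-y)" if "0 \<le> z" using that assms by simp
    have F3: "0 \<le> pi*(b-z)" "0 < pi*b" using assms by auto
    have F4: "0 < z*(b-y)" if "z = b" using that assms by simp
    have F5: "0 < pi*(b-z)" if "z < b" using that assms by simp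
    have e: "(-(z*y) - pi*(z - y)) - (-(z*(2*b-y)) - pi*(2*b - z - y)) = 2*(z*(b-y)) + 2*(pi*(b-z))"
      by (simp add: algebra_simps)
    have e2: "z*pi + pi*(b-z) = pi*b" by (simp add: algebra_simps)
    consider "z < 0" | "0 \<le> z" "z < b" | "z = b" using assms by linarith
    then show ?thesis
    proof cases
      case 1 show ?thesis unfolding a1 a2 by (rule H1s[OF e F1[OF 1] e2 F3(2)])
    next
      case 2 then show ?thesis unfolding a1 a2 using e F2[OF 2(1)] F5[OF 2(2)] by linarith
    next
      case 3 then show ?thesis unfolding a1 a2 using e F3 F4[OF 3] by linarith
    qed
  qed
qed

lemma K3a: fixes x y b :: real assumes "b \<le> x" "x \<le> pi" "-pi \<le> y" "y < 2*b - pi" "0<b" "b<pi"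
  shows "Gk x y \<le> Gk (2*b-x) y"
  unfolding Gk_le_iff PP_def
proof -
  have a1: "\<bar>x - y\<bar> = x - y" "\<bar>(2*b-x) - y\<bar> = 2*b - x - y" using assms by auto
  have F: "0 \<le> (x - b) * (y + pi)" using assms by simp
  have e: "(-((2*b-x)*y) - pi*(2*b - x - y)) - (-(x*y) - pi*(x - y)) = 2*((x - b) * (y + pi))"
    by (simp add: algebra_simps)
  show "-(x*y) - pi*\<bar>x-y\<bar> \<le> -((2*b-x)*y) - pi*\<bar>(2*b-x)-y\<bar>"
    unfolding a1 using e F by linarith
qed

lemma K3b: fixes x y b :: real assumes "b \<le> x" "x \<le> pi" "2*b-pi \<le> y" "y \<le> b" "0<b" "b<pi"
  shows "Gk x y \<le> Gk (2*b-x) y"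
  unfolding Gk_le_iff PP_def
proof -
  have a1: "\<bar>x - y\<bar> = x - y" using assms by auto
  have f1: "0 \<le> (x - b) * (y + pi)" using assms by simp
  have f2: "y*(pi-b) \<le> y*(x-b)" if "y < 0" using that assms by (intro mult_left_mono_neg) auto
  have f3: "0 \<le> y*(x-b)" if "0 \<le> y" using that assms by simp
  have f4: "0 \<le> b*(pi-y)" "0 \<le> pi*(b-y)" using assms by auto
  show "-(x*y) - pi*\<bar>x-y\<bar> \<le> -((2*b-x)*y) - pi*\<bar>(2*b-x)-y\<bar>"
  proof (cases "y \<le> 2*b - x")
    case True
    then have a2: "\<bar>(2*b-x) - y\<bar> = 2*b - x - y" by simp
    have e: "(-((2*b-x)*y) - pi*(2*b - x - y)) - (-(x*y) - pi*(x - y)) = 2*((x - b) * (y + pi))"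
      by (simp add: algebra_simps)
    show ?thesis unfolding a1 a2 using e f1 by linarith
  next
    case False
    then have a2: "\<bar>(2*b-x) - y\<bar> = y - (2*b - x)" by simp
    have e: "(-((2*b-x)*y) - pi*(y - (2*b - x))) - (-(x*y) - pi*(x - y)) = 2*(y*(x-b)) + 2*(pi*(b-y))"
      by (simp add: algebra_simps)
    have e2: "y*(pi-b) + pi*(b-y) = b*(pi-y)" by (simp add: algebra_simps)
    show ?thesis
    proof (cases "y < 0")
      case True show ?thesis unfolding a1 a2 by (rule H1[OF e f2[OF True] e2 f4(1)])
    next
      case False then show ?thesis unfolding a1 a2 using e f3 f4 by simp
    qed
  qed
qed

lemma K3c: fixes x y b :: real assumes "b \<le> x" "x \<le> pi" "2*b-pi \<le> y" "y \<le> b" "0<b" "b<pi"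
  shows "Gk x (2*b-y) \<le> Gk (2*b-x) y"
  unfolding Gk_le_iff PP_def
proof -
  have a1: "\<bar>x - (2*b-y)\<bar> = \<bar>(2*b-x) - y\<bar>" by (simp add: abs_if)
  have F: "0 \<le> b * (x - y)" using assms by simp
  have e: "(-((2*b-x)*y)) - (-(x*(2*b-y))) = 2*(b * (x - y))" by (simp add: algebra_simps)
  show "-(x*(2*b-y)) - pi*\<bar>x-(2*b-y)\<bar> \<le> -((2*b-x)*y) - pi*\<bar>(2*b-x)-y\<bar>"
    unfolding a1 using e F by linarith
qed

lemma K3d: fixes x y b :: real assumes "b \<le> x" "x \<le> pi" "2*b-pi \<le> y" "y \<le> b" "0<b" "b<pi"
  shows "Gk x y + Gk x (2*b-y) \<le> Gk (2*b-x) y + Gk (2*b-x) (2*b-y)"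
  unfolding Gk_sum_le_iff PP_def
proof -
  have a1: "\<bar>x - (2*b-y)\<bar> = \<bar>(2*b-x) - y\<bar>" by (simp add: abs_if)
  have a2: "\<bar>x - y\<bar> = x - y" "\<bar>(2*b-x) - (2*b-y)\<bar> = (2*b - y) - (2*b-x)" using assms by auto
  have F: "0 \<le> b * (x - b)" using assms by simp
  have e: "(-((2*b-x)*y) - pi*\<bar>(2*b-x)-y\<bar> + (-((2*b-x)*(2*b-y)) - pi*((2*b - y) - (2*b-x))))
     - (-(x*y) - pi*(x - y) + (-(x*(2*b-y)) - pi*\<bar>(2*b-x)-y\<bar>)) = 4*(b * (x - b))"
    by (simp add: algebra_simps)
  show "-(x*y) - pi*\<bar>x-y\<bar> + (-(x*(2*b-y)) - pi*\<bar>x-(2*b-y)\<bar>) \<le> -((2*b-x)*y) - pi*\<bar>(2*b-x)-y\<bar> + (-((2*b-x)*(2*b-y)) - pi*\<bar>(2*b-x)-(2*b-y)\<bar>)"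
    unfolding a1 a2 using e F by linarith
qed

lemma K4: fixes x y b :: real assumes "b \<le> x" "x \<le> pi" "2*b-pi \<le> y" "y \<le> b" "0<b" "b<pi"
  shows "Gk x (2*b-y) + Gk (2*b-x) (2*b-y) \<le> Gk x y + Gk (2*b-x) y"
  unfolding Gk_sum_le_iff PP_def
proof -
  have a1: "\<bar>x - (2*b-y)\<bar> = \<bar>(2*b-x) - y\<bar>" by (simp add: abs_if)
  have a2: "\<bar>x - y\<bar> = x - y" "\<bar>(2*b-x) - (2*b-y)\<bar> = (2*b - y) - (2*b-x)" using assms by auto
  have F: "0 \<le> b * (b - y)" using assms by simp
  have e: "(-(x*y) - pi*(x - y) + (-((2*b-x)*y) - pi*\<bar>(2*b-x)-y\<bar>))
     - (-(x*(2*b-y)) - pi*\<bar>(2*b-x)-y\<bar> + (-((2*b-x)*(2*b-y)) - pi*((2*b - y) - (2*b-x)))) = 4*(b * (b - y))"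
    by (simp add: algebra_simps)
  show "-(x*(2*b-y)) - pi*\<bar>x-(2*b-y)\<bar> + (-((2*b-x)*(2*b-y)) - pi*\<bar>(2*b-x)-(2*b-y)\<bar>) \<le> -(x*y) - pi*\<bar>x-y\<bar> + (-((2*b-x)*y) - pi*\<bar>(2*b-x)-y\<bar>)"
    unfolding a1 a2 using e F by linarith
qed



definition FixR :: "real \<Rightarrow> real \<Rightarrow> bool" where
  "FixR b y \<longleftrightarrow> (if 0 < b then -pi \<le> y \<and> y < 2*b - pi else 2*b + pi < y \<and> y \<le> pi)"
definition MaxR :: "real \<Rightarrow> real \<Rightarrow> bool" where
  "MaxR b y \<longleftrightarrow> (if 0 < b then 2*b - pi \<le> y \<and> y \<le> b else b \<le> y \<and> y \<le> 2*b + pi)"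
definition MaxRs :: "real \<Rightarrow> real \<Rightarrow> bool" where
  "MaxRs b y \<longleftrightarrow> (if 0 < b then 2*b - pi \<le> y \<and> y < b else b < y \<and> y \<le> 2*b + pi)"

lemma neg2: "Gk (-z) (2*(-b) - (-y)) = Gk z (2*b - y)"
  using Gk_neg[of z "2*b-y"] by simp

lemma KU1:
  assumes b: "b \<in> {-pi<..<0} \<union> {0<..<pi}" and z: "z \<in> (if 0 < b then {-pi..b} else {b..pi})" and y: "MaxR b y"
  shows "Gk z (2*b-y) \<le> Gk z y"
proof (cases "0 < b")
  case True then show ?thesis using b z y by (intro K1) (auto simp: MaxR_def)
next
  case False
  have "Gk (-z) (2*(-b) - (-y)) \<le> Gk (-z) (-y)" using False b z y by (intro K1) (auto simp: MaxR_def)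
  then show ?thesis by (simp only: neg2 Gk_neg)
qed

lemma KU1s:
  assumes b: "b \<in> {-pi<..<0} \<union> {0<..<pi}" and z: "z \<in> (if 0 < b then {-pi<..b} else {b..<pi})" and y: "MaxRs b y"
  shows "Gk z (2*b-y) < Gk z y"
proof (cases "0 < b")
  case True then show ?thesis using b z y by (intro K1s) (auto simp: MaxRs_def)
next
  case False
  have "Gk (-z) (2*(-b) - (-y)) < Gk (-z) (-y)" using False b z y by (intro K1s) (auto simp: MaxRs_def)
  then show ?thesis by (simp only: neg2 Gk_neg)
qed

lemma neg3: "Gk (-x) (-y) = Gk x y" "Gk (2*(-b) - (-x)) (-y) = Gk (2*b - x) y"
    "Gk (-x) (2*(-b) - (-y)) = Gk x (2*b - y)" "Gk (2*(-b) - (-x)) (2*(-b) - (-y)) = Gk (2*b - x) (2*b - y)"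
  using Gk_neg[of x y] Gk_neg[of "2*b-x" y] Gk_neg[of x "2*b-y"] Gk_neg[of "2*b-x" "2*b-y"] by simp_all

lemma KU3a:
  assumes b: "b \<in> {-pi<..<0} \<union> {0<..<pi}" and x: "x \<in> (if 0 < b then {b..pi} else {-pi..b})" and y: "FixR b y"
  shows "Gk x y \<le> Gk (2*b-x) y"
proof (cases "0 < b")
  case True then show ?thesis using b x y by (intro K3a) (auto simp: FixR_def)
next
  case False
  have "Gk (-x) (-y) \<le> Gk (2*(-b) - (-x)) (-y)" using False b x y by (intro K3a) (auto simp: FixR_def)
  then show ?thesis by (simp only: neg3)
qed

lemma KU3:
  assumes b: "b \<in> {-pi<..<0} \<union> {0<..<pi}" and x: "x \<in> (if 0 < b then {b..pi} else {-pi..b})" and y: "MaxR b y"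
  shows "Gk x y \<le> Gk (2*b-x) y" "Gk x (2*b-y) \<le> Gk (2*b-x) y"
    "Gk x y + Gk x (2*b-y) \<le> Gk (2*b-x) y + Gk (2*b-x) (2*b-y)"
    "Gk x (2*b-y) + Gk (2*b-x) (2*b-y) \<le> Gk x y + Gk (2*b-x) y"
proof -
  have "(Gk x y \<le> Gk (2*b-x) y) \<and> (Gk x (2*b-y) \<le> Gk (2*b-x) y) \<and>
    (Gk x y + Gk x (2*b-y) \<le> Gk (2*b-x) y + Gk (2*b-x) (2*b-y)) \<and>
    (Gk x (2*b-y) + Gk (2*b-x) (2*b-y) \<le> Gk x y + Gk (2*b-x) y)"
  proof (cases "0 < b")
    case True
    then have h: "b \<le> x" "x \<le> pi" "2*b-pi \<le> y" "y \<le> b" "0<b" "b<pi" using b x y by (auto simp: MaxR_def)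
    show ?thesis using K3b[OF h] K3c[OF h] K3d[OF h] K4[OF h] by simp
  next
    case False
    then have h: "-b \<le> -x" "-x \<le> pi" "2*(-b)-pi \<le> -y" "-y \<le> -b" "0< -b" "-b<pi" using b x y by (auto simp: MaxR_def)
    show ?thesis using K3b[OF h] K3c[OF h] K3d[OF h] K4[OF h] by (simp only: neg3)
  qed
  then show "Gk x y \<le> Gk (2*b-x) y" "Gk x (2*b-y) \<le> Gk (2*b-x) y"
    "Gk x y + Gk x (2*b-y) \<le> Gk (2*b-x) y + Gk (2*b-x) (2*b-y)"
    "Gk x (2*b-y) + Gk (2*b-x) (2*b-y) \<le> Gk x y + Gk (2*b-x) y" by auto
qed



lemma maj:
  fixes \<phi> :: "real \<Rightarrow> real"
  assumes conv: "convex_on UNIV \<phi>" and mono: "mono \<phi>"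
    and h1: "B \<le> BH" and h2: "A \<le> BH" and h3: "A + B \<le> AH + BH"
  shows "\<phi> A + \<phi> B \<le> \<phi> AH + \<phi> BH"
proof -
  define s where "s = A + B - BH"
  define t where "t = BH"
  have sA: "s \<le> A" "s \<le> B" "s \<le> AH" using h1 h2 h3 by (auto simp: s_def)
  have key: "\<phi> A + \<phi> B \<le> \<phi> s + \<phi> t"
  proof (cases "s = t")
    case True
    then have "A = s" "B = s" using sA h1 h2 by (auto simp: s_def t_def)
    then show ?thesis using True by simp
  next
    case False
    then have st: "s < t" using sA h2 by (auto simp: t_def)
    define l where "l = (A - s) / (t - s)"
    have l01: "0 \<le> l" "l \<le> 1" using st sA h2 by (auto simp: l_def t_def field_simps)
    have lt: "l * (t - s) = A - s" using st by (simp add: l_def)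
    have Ae: "A = (1 - l) *\<^sub>R s + l *\<^sub>R t"
    proof -
      have "(1 - l) *\<^sub>R s + l *\<^sub>R t = s + l * (t - s)" by (simp add: algebra_simps)
      then show ?thesis using lt by simp
    qed
    have Be: "B = (1 - (1 - l)) *\<^sub>R s + (1 - l) *\<^sub>R t"
    proof -
      have "(1 - (1 - l)) *\<^sub>R s + (1 - l) *\<^sub>R t = t - l * (t - s)" by (simp add: algebra_simps)
      then show ?thesis using lt by (simp add: s_def t_def)
    qed
    have "\<phi> A \<le> (1 - l) * \<phi> s + l * \<phi> t"
      unfolding Ae by (rule convex_onD[OF conv]) (use l01 in auto)
    moreover have "\<phi> B \<le> (1 - (1 - l)) * \<phi> s + (1 - l) * \<phi> t"
      unfolding Be by (rule convex_onD[OF conv]) (use l01 in auto)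
    ultimately show ?thesis by (simp add: algebra_simps)
  qed
  moreover have "\<phi> s \<le> \<phi> AH" using mono sA(3) by (rule monoD)
  ultimately show ?thesis by (simp add: t_def)
qed

lemma Pt_gen:
  fixes h k kH :: "real \<Rightarrow> real"
  assumes b: "b \<in> {-pi<..<0} \<union> {0<..<pi}"
    and hn: "\<And>x. 0 \<le> h x" and hz: "\<And>x. x \<notin> {-pi..pi} \<Longrightarrow> h x = 0"
    and KF: "\<And>y. FixR b y \<Longrightarrow> k y \<le> kH y"
    and KMa: "\<And>y. MaxR b y \<Longrightarrow> KM k kH y (2*b - y)"
  shows "0 \<le> Ef b h k kH y + Ef b h k kH (2*b - y)"
proof (cases "0 < b")
  case True
  show ?thesis
    by (rule ptwise_pos[OF True _ hn hz]) (use b True KF KMa in \<open>auto simp: FixR_def MaxR_def\<close>)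
next
  case False
  show ?thesis
    by (rule ptwise_neg[OF _ _ hn hz]) (use b False KF KMa in \<open>auto simp: FixR_def MaxR_def\<close>)
qed

lemma Peq_gen:
  fixes h k :: "real \<Rightarrow> real"
  assumes b: "b \<in> {-pi<..<0} \<union> {0<..<pi}"
    and hn: "\<And>x. 0 \<le> h x" and hz: "\<And>x. x \<notin> {-pi..pi} \<Longrightarrow> h x = 0"
    and st: "\<And>y. MaxRs b y \<Longrightarrow> k (2*b - y) < k y"
    and z: "Ef b h k k y + Ef b h k k (2*b - y) = 0"
  shows "polar b h y = h y"
proof (cases "0 < b")
  case True
  show ?thesis
    by (rule ptwise_eq_pos[OF True _ hn hz _ z]) (use b True st in \<open>auto simp: MaxRs_def\<close>)
next
  case False
  show ?thesis
    by (rule ptwise_eq_neg[OF _ _ hn hz _ z]) (use b False st in \<open>auto simp: MaxRs_def\<close>)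
qed

lemma compare:
  fixes h c k kH :: "real \<Rightarrow> real"
  assumes b: "b \<in> {-pi<..<0} \<union> {0<..<pi}"
    and hi: "integrable lebesgue h" and hn: "\<And>x. 0 \<le> h x" and hz: "\<And>x. x \<notin> {-pi..pi} \<Longrightarrow> h x = 0"
    and cs: "c summable_on UNIV" and cn: "\<And>x. 0 \<le> c x" and cz: "\<And>x. x \<notin> {-pi..pi} \<Longrightarrow> c x = 0"
    and km: "k \<in> borel_measurable borel" "kH \<in> borel_measurable borel"
    and kb: "\<And>y. y \<in> {-pi..pi} \<Longrightarrow> \<bar>k y\<bar> \<le> C" "\<And>y. y \<in> {-pi..pi} \<Longrightarrow> \<bar>kH y\<bar> \<le> C"
    and KF: "\<And>y. FixR b y \<Longrightarrow> k y \<le> kH y"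
    and KMa: "\<And>y. MaxR b y \<Longrightarrow> KM k kH y (2*b - y)"
  shows "(\<integral>y. h y * k y \<partial>lebesgue) + (\<Sum>\<^sub>\<infinity>y. c y * k y)
       \<le> (\<integral>y. polar b h y * kH y \<partial>lebesgue) + (\<Sum>\<^sub>\<infinity>y. polar b c y * kH y)"
proof -
  have "(\<integral>y. h y * k y \<partial>lebesgue) \<le> (\<integral>y. polar b h y * kH y \<partial>lebesgue)"
    by (rule sym_int(1)[OF b hi hn hz km kb Pt_gen[OF b hn hz KF KMa]])
  moreover have "(\<Sum>\<^sub>\<infinity>y. c y * k y) \<le> (\<Sum>\<^sub>\<infinity>y. polar b c y * kH y)"
    by (rule sym_sum(1)[OF b cs cn cz kb Pt_gen[OF b cn cz KF KMa]])
  ultimately show ?thesis by simp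
qed

lemma compare_eq:
  fixes h c k :: "real \<Rightarrow> real"
  assumes b: "b \<in> {-pi<..<0} \<union> {0<..<pi}"
    and hi: "integrable lebesgue h" and hn: "\<And>x. 0 \<le> h x" and hz: "\<And>x. x \<notin> {-pi..pi} \<Longrightarrow> h x = 0"
    and cs: "c summable_on UNIV" and cn: "\<And>x. 0 \<le> c x" and cz: "\<And>x. x \<notin> {-pi..pi} \<Longrightarrow> c x = 0"
    and km: "k \<in> borel_measurable borel"
    and kb: "\<And>y. y \<in> {-pi..pi} \<Longrightarrow> \<bar>k y\<bar> \<le> C"
    and K2: "\<And>y. MaxR b y \<Longrightarrow> k (2*b - y) \<le> k y"
    and st: "\<And>y. MaxRs b y \<Longrightarrow> k (2*b - y) < k y"
    and eq: "(\<integral>y. h y * k y \<partial>lebesgue) + (\<Sum>\<^sub>\<infinity>y. c y * k y)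
       = (\<integral>y. polar b h y * k y \<partial>lebesgue) + (\<Sum>\<^sub>\<infinity>y. polar b c y * k y)"
  shows "(AE y in lebesgue. polar b h y = h y) \<and> (\<forall>y. polar b c y = c y)"
proof -
  have KF: "\<And>y. FixR b y \<Longrightarrow> k y \<le> k y" by simp
  have KMa: "\<And>y. MaxR b y \<Longrightarrow> KM k k y (2*b - y)" using K2 by (auto simp: KM_def)
  have i1: "(\<integral>y. h y * k y \<partial>lebesgue) \<le> (\<integral>y. polar b h y * k y \<partial>lebesgue)"
    by (rule sym_int(1)[OF b hi hn hz km km kb kb Pt_gen[OF b hn hz KF KMa]])
  have i2: "(\<Sum>\<^sub>\<infinity>y. c y * k y) \<le> (\<Sum>\<^sub>\<infinity>y. polar b c y * k y)"
    by (rule sym_sum(1)[OF b cs cn cz kb kb Pt_gen[OF b cn cz KF KMa]])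
  have e1: "(\<integral>y. h y * k y \<partial>lebesgue) = (\<integral>y. polar b h y * k y \<partial>lebesgue)" using i1 i2 eq by linarith
  have e2: "(\<Sum>\<^sub>\<infinity>y. c y * k y) = (\<Sum>\<^sub>\<infinity>y. polar b c y * k y)" using i1 i2 eq by linarith
  have "AE y in lebesgue. Ef b h k k y + Ef b h k k (2*b - y) = 0"
    by (rule sym_int(2)[OF b hi hn hz km km kb kb Pt_gen[OF b hn hz KF KMa] e1])
  then have A: "AE y in lebesgue. polar b h y = h y"
    by eventually_elim (rule Peq_gen[where h=h and k=k, OF b hn hz st])
  have "\<forall>y. Ef b c k k y + Ef b c k k (2*b - y) = 0"
    by (rule sym_sum(2)[OF b cs cn cz kb kb Pt_gen[OF b cn cz KF KMa] e2])
  then have "\<forall>y. polar b c y = c y" using Peq_gen[where h=c and k=k, OF b cn cz st] by blast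
  with A show ?thesis by blast
qed

lemma prodint_gen:
  fixes g kk :: "real \<Rightarrow> real"
  assumes gi: "integrable lebesgue g" and gn: "\<And>x. 0 \<le> g x" and gz: "\<And>x. x \<notin> {-pi..pi} \<Longrightarrow> g x = 0"
    and kkm: "kk \<in> borel_measurable borel" and kkb: "\<And>y. y \<in> {-pi..pi} \<Longrightarrow> \<bar>kk y\<bar> \<le> C"
  shows "integrable lebesgue (\<lambda>x. g x * kk x)"
proof (rule Bochner_Integration.integrable_bound[where f="\<lambda>x. C * g x"])
  show "integrable lebesgue (\<lambda>x. C * g x)" using gi by simp
  have "kk \<in> borel_measurable lebesgue" using kkm measurable_completion measurable_lborel2 by blast
  then show "(\<lambda>x. g x * kk x) \<in> borel_measurable lebesgue"
    using borel_measurable_integrable[OF gi] by (intro borel_measurable_times)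
  show "AE x in lebesgue. norm (g x * kk x) \<le> norm (C * g x)"
  proof (rule AE_I2)
    fix x show "norm (g x * kk x) \<le> norm (C * g x)"
    proof (cases "x \<in> {-pi..pi}")
      case True
      have "g x * \<bar>kk x\<bar> \<le> g x * \<bar>C\<bar>" using kkb[OF True] gn[of x] by (intro mult_left_mono) auto
      then show ?thesis using gn[of x] by (simp add: abs_mult mult.commute)
    next
      case False then show ?thesis using gz by simp
    qed
  qed
qed

lemma prodsum_gen:
  fixes g kk :: "real \<Rightarrow> real"
  assumes gs: "g summable_on UNIV" and gn: "\<And>x. 0 \<le> g x" and gz: "\<And>x. x \<notin> {-pi..pi} \<Longrightarrow> g x = 0"
    and kkb: "\<And>y. y \<in> {-pi..pi} \<Longrightarrow> \<bar>kk y\<bar> \<le> C"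
  shows "(\<lambda>x. g x * kk x) summable_on UNIV"
proof (rule summable_by_bound[OF summable_on_cmult_right[OF gs, of "\<bar>C\<bar>"]])
  fix x show "\<bar>g x * kk x\<bar> \<le> \<bar>C\<bar> * g x"
  proof (cases "x \<in> {-pi..pi}")
    case True
    have "g x * \<bar>kk x\<bar> \<le> g x * \<bar>C\<bar>" using kkb[OF True] gn[of x] by (intro mult_left_mono) auto
    then show ?thesis using gn[of x] by (simp add: abs_mult mult.commute)
  next
    case False then show ?thesis using gz by simp
  qed
qed

lemma lin_gen:
  fixes g c k1 k2 :: "real \<Rightarrow> real"
  assumes gi: "integrable lebesgue g" and gn: "\<And>x. 0 \<le> g x" and gz: "\<And>x. x \<notin> {-pi..pi} \<Longrightarrow> g x = 0"
    and cs: "c summable_on UNIV" and cn: "\<And>x. 0 \<le> c x" and cz: "\<And>x. x \<notin> {-pi..pi} \<Longrightarrow> c x = 0"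
    and km: "k1 \<in> borel_measurable borel" "k2 \<in> borel_measurable borel"
    and kb: "\<And>y. y \<in> {-pi..pi} \<Longrightarrow> \<bar>k1 y\<bar> \<le> C" "\<And>y. y \<in> {-pi..pi} \<Longrightarrow> \<bar>k2 y\<bar> \<le> C"
  shows "((\<integral>y. g y * k1 y \<partial>lebesgue) + (\<Sum>\<^sub>\<infinity>y. c y * k1 y)) + ((\<integral>y. g y * k2 y \<partial>lebesgue) + (\<Sum>\<^sub>\<infinity>y. c y * k2 y))
     = (\<integral>y. g y * (k1 y + k2 y) \<partial>lebesgue) + (\<Sum>\<^sub>\<infinity>y. c y * (k1 y + k2 y))"
proof -
  have "(\<integral>y. g y * (k1 y + k2 y) \<partial>lebesgue) = (\<integral>y. g y * k1 y + g y * k2 y \<partial>lebesgue)"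
    by (simp add: distrib_left)
  also have "\<dots> = (\<integral>y. g y * k1 y \<partial>lebesgue) + (\<integral>y. g y * k2 y \<partial>lebesgue)"
    by (rule Bochner_Integration.integral_add[OF prodint_gen[OF gi gn gz km(1) kb(1)] prodint_gen[OF gi gn gz km(2) kb(2)]])
  finally have 1: "(\<integral>y. g y * (k1 y + k2 y) \<partial>lebesgue) = (\<integral>y. g y * k1 y \<partial>lebesgue) + (\<integral>y. g y * k2 y \<partial>lebesgue)" .
  have "(\<Sum>\<^sub>\<infinity>y. c y * (k1 y + k2 y)) = (\<Sum>\<^sub>\<infinity>y. c y * k1 y + c y * k2 y)"
    by (simp add: distrib_left)
  also have "\<dots> = (\<Sum>\<^sub>\<infinity>y. c y * k1 y) + (\<Sum>\<^sub>\<infinity>y. c y * k2 y)"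
    by (rule infsum_add[OF prodsum_gen[OF cs cn cz kb(1)] prodsum_gen[OF cs cn cz kb(2)]])
  finally have 2: "(\<Sum>\<^sub>\<infinity>y. c y * (k1 y + k2 y)) = (\<Sum>\<^sub>\<infinity>y. c y * k1 y) + (\<Sum>\<^sub>\<infinity>y. c y * k2 y)" .
  show ?thesis using 1 2 by simp
qed



lemma polar_integrable:
  fixes h :: "real \<Rightarrow> real"
  assumes hi: "integrable lebesgue h" and hn: "\<And>x. 0 \<le> h x"
  shows "integrable lebesgue (polar b h)"
proof (rule Bochner_Integration.integrable_bound[where f="\<lambda>x. h x + h (2*b - x)"])
  have ri: "integrable lebesgue (\<lambda>x. h (2*b - x))"
    using lebesgue_integrable_real_affine[OF hi, of "-1" "2*b"] by simp
  show "integrable lebesgue (\<lambda>x. h x + h (2*b - x))" using hi ri by (rule Bochner_Integration.integrable_add)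
  show "polar b h \<in> borel_measurable lebesgue" using polar_meas[OF borel_measurable_integrable[OF hi]] .
  show "AE x in lebesgue. norm (polar b h x) \<le> norm (h x + h (2 * b - x))"
    using polar_le[OF hn] polar_nonneg[OF hn] hn by (auto intro!: AE_I2 simp: add_nonneg_nonneg)
qed

lemma polar_summable:
  fixes c :: "real \<Rightarrow> real"
  assumes cs: "c summable_on UNIV" and cn: "\<And>x. 0 \<le> c x"
  shows "polar b c summable_on UNIV"
proof (rule summable_on_comparison_test[where f="\<lambda>x. c x + c (2*b - x)"])
  have rs: "(\<lambda>x. c (2*b - x)) summable_on UNIV"
    using summable_on_reindex_bij_betw[OF bij_refl[of b], of c] cs by simp
  show "(\<lambda>x. c x + c (2*b - x)) summable_on UNIV" using cs rs by (rule summable_on_add)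
  show "polar b c x \<le> c x + c (2*b - x)" for x using polar_le[OF cn] .
  show "0 \<le> polar b c x" for x using polar_nonneg[OF cn] .
qed

theorem proposition4p5:
  fixes f a :: "real \<Rightarrow> real" and b :: real and \<phi> :: "real \<Rightarrow> real"
  assumes f_nonneg: "\<And>x. 0 \<le> f x"
      and f_int: "f integrable_on {-pi..pi}"
      and a_nonneg: "\<And>x. 0 \<le> a x"
      and a_supp: "\<And>x. x \<notin> {-pi<..<pi} \<Longrightarrow> a x = 0"
      and a_summable: "a summable_on UNIV"
      and nonzero: "emeasure (disc_ac_measure f a) {-pi<..<pi} \<noteq> 0"
      and b: "b \<in> {-pi<..<0} \<union> {0<..<pi}"
      and conv: "convex_on UNIV \<phi>"
      and incr: "mono \<phi>"
  shows
    "(\<forall>x \<in> (if 0 < b then {b..pi} else {-pi..b}).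
        \<phi> (u_meas (disc_ac_measure f a) x) + \<phi> (u_meas (disc_ac_measure f a) (2 * b - x))
        \<le> \<phi> (u_meas (disc_ac_measure (polar b f) (polar b a)) x)
          + \<phi> (u_meas (disc_ac_measure (polar b f) (polar b a)) (2 * b - x)))
   \<and> (\<forall>x \<in> (if 0 < b then {-pi..b} else {b..pi}).
        \<phi> (u_meas (disc_ac_measure f a) x)
        \<le> \<phi> (u_meas (disc_ac_measure (polar b f) (polar b a)) x))
   \<and> (strict_mono \<phi> \<longrightarrow>
        ((\<exists>x \<in> (if 0 < b then {-pi<..b} else {b..<pi}).
            \<phi> (u_meas (disc_ac_measure f a) x)
            = \<phi> (u_meas (disc_ac_measure (polar b f) (polar b a)) x))
         \<longleftrightarrow> (\<forall>x \<in> (if 0 < b then {-pi<..b} else {b..<pi}).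
            \<phi> (u_meas (disc_ac_measure f a) x)
            = \<phi> (u_meas (disc_ac_measure (polar b f) (polar b a)) x)))
      \<and> ((\<forall>x \<in> (if 0 < b then {-pi<..b} else {b..<pi}).
            \<phi> (u_meas (disc_ac_measure f a) x)
            = \<phi> (u_meas (disc_ac_measure (polar b f) (polar b a)) x))
         \<longleftrightarrow> disc_ac_measure f a = disc_ac_measure (polar b f) (polar b a)))"
proof -
  let ?S = "{-pi..pi} :: real set"
  let ?M = "disc_ac_measure f a"
  let ?MH = "disc_ac_measure (polar b f) (polar b a)"
  define h where "h = (\<lambda>x. indicator {-pi..pi} x * f x)"
  have hi: "integrable lebesgue h"
  proof -
    have "f absolutely_integrable_on {-pi..pi}"
      by (rule nonnegative_absolutely_integrable_1[OF f_int]) (use f_nonneg in auto)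
    then show ?thesis unfolding h_def set_integrable_def by simp
  qed
  have hn: "\<And>x. 0 \<le> h x" using f_nonneg by (simp add: h_def)
  have hz: "\<And>x. x \<notin> {-pi..pi} \<Longrightarrow> h x = 0" by (simp add: h_def)
  have hH: "polar b h = (\<lambda>x. indicator {-pi..pi} x * polar b f x)"
    unfolding h_def by (rule polar_ind[OF b f_nonneg])
  have hHi: "integrable lebesgue (polar b h)" by (rule polar_integrable[OF hi hn])
  have hHn: "\<And>x. 0 \<le> polar b h x" using polar_nonneg[OF hn] .
  have hHz: "\<And>x. x \<notin> {-pi..pi} \<Longrightarrow> polar b h x = 0" using polar_zero_closed[OF b hn hz] .
  have az: "\<And>x. x \<notin> {-pi..pi} \<Longrightarrow> a x = 0" using a_supp by auto
  have aHs: "polar b a summable_on UNIV" by (rule polar_summable[OF a_summable a_nonneg])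
  have aHn: "\<And>x. 0 \<le> polar b a x" using polar_nonneg[OF a_nonneg] .
  have aHz: "\<And>x. x \<notin> {-pi..pi} \<Longrightarrow> polar b a x = 0" using polar_zero_closed[OF b a_nonneg az] .
  have aHzo: "\<And>x. x \<notin> {-pi<..<pi} \<Longrightarrow> polar b a x = 0" using polar_zero_open[OF b a_nonneg a_supp] .
  have pfn: "\<And>x. 0 \<le> polar b f x" using polar_nonneg[OF f_nonneg] .
  define V :: "(real \<Rightarrow> real) \<Rightarrow> (real \<Rightarrow> real) \<Rightarrow> (real \<Rightarrow> real) \<Rightarrow> real" where "V = (\<lambda>g c k. (\<integral>y. g y * k y \<partial>lebesgue) + (\<Sum>\<^sub>\<infinity>y. c y * k y))"
  have U: "u_meas ?M z = V h a (Gk z)" if "z \<in> ?S" for z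
    using u_formula[OF f_nonneg _ a_nonneg a_supp a_summable that] hi
    unfolding V_def h_def by (simp add: mult.assoc)
  have UH: "u_meas ?MH z = V (polar b h) (polar b a) (Gk z)" if "z \<in> ?S" for z
  proof -
    have "integrable lebesgue (\<lambda>x. indicator {-pi..pi} x * polar b f x)" using hHi unfolding hH .
    then show ?thesis
      using u_formula[OF pfn _ aHn aHzo aHs that] unfolding V_def hH by (simp add: mult.assoc)
  qed
  have Gm: "Gk z \<in> borel_measurable borel" for z by (rule Gk_meas)
  have Gb: "\<bar>Gk z y\<bar> \<le> pi" if "z \<in> ?S" "y \<in> ?S" for z y
    using Gk_nonneg[OF that] Gk_le[OF that] by simp
  have cmp: "V h a k \<le> V (polar b h) (polar b a) kH"
    if "k \<in> borel_measurable borel" "kH \<in> borel_measurable borel"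
       "\<And>y. y \<in> ?S \<Longrightarrow> \<bar>k y\<bar> \<le> C" "\<And>y. y \<in> ?S \<Longrightarrow> \<bar>kH y\<bar> \<le> C"
       "\<And>y. FixR b y \<Longrightarrow> k y \<le> kH y" "\<And>y. MaxR b y \<Longrightarrow> KM k kH y (2*b - y)" for k kH C
    unfolding V_def by (rule compare[OF b hi hn hz a_summable a_nonneg az that])
  define BR where "BR = (if 0 < b then {-pi..b} else {b..pi})"
  define AR where "AR = (if 0 < b then {b..pi} else {-pi..b})"
  define CR where "CR = (if 0 < b then {-pi<..b} else {b..<pi})"
  have BRS: "BR \<subseteq> ?S" using b by (auto simp: BR_def)
  have ARS: "AR \<subseteq> ?S" using b by (auto simp: AR_def)
  have CRB: "CR \<subseteq> BR" by (auto simp: CR_def BR_def)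
  have bC: "b \<in> CR" using b by (auto simp: CR_def)
  have Ub: "u_meas ?M z \<le> u_meas ?MH z" if z: "z \<in> BR" for z
  proof -
    have zS: "z \<in> ?S" using z BRS by auto
    have "V h a (Gk z) \<le> V (polar b h) (polar b a) (Gk z)"
    proof (rule cmp[OF Gm Gm])
      show "\<bar>Gk z y\<bar> \<le> pi" if "y \<in> ?S" for y using Gb[OF zS that] .
      then show "\<bar>Gk z y\<bar> \<le> pi" if "y \<in> ?S" for y using that .
      show "Gk z y \<le> Gk z y" for y by simp
      show "KM (Gk z) (Gk z) y (2*b - y)" if "MaxR b y" for y
        using KU1[OF b _ that, of z] z unfolding KM_def BR_def by simp
    qed
    then show ?thesis using U[OF zS] UH[OF zS] by simp
  qed
  have partA: "\<phi> (u_meas ?M x) + \<phi> (u_meas ?M (2 * b - x))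
        \<le> \<phi> (u_meas ?MH x) + \<phi> (u_meas ?MH (2 * b - x))" if x: "x \<in> AR" for x
  proof -
    let ?x' = "2*b - x"
    have xS: "x \<in> ?S" using x ARS by auto
    have x'B: "?x' \<in> BR" using x b by (auto simp: AR_def BR_def)
    have x'S: "?x' \<in> ?S" using x'B BRS by auto
    have x1: "x \<in> (if 0 < b then {b..pi} else {-pi..b})" using x by (simp add: AR_def)
    have h1: "u_meas ?M ?x' \<le> u_meas ?MH ?x'" by (rule Ub[OF x'B])
    have h2: "u_meas ?M x \<le> u_meas ?MH ?x'"
    proof -
      have "V h a (Gk x) \<le> V (polar b h) (polar b a) (Gk ?x')"
      proof (rule cmp[OF Gm Gm])
        show "\<bar>Gk x y\<bar> \<le> pi" if "y \<in> ?S" for y using Gb[OF xS that] .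
        show "\<bar>Gk ?x' y\<bar> \<le> pi" if "y \<in> ?S" for y using Gb[OF x'S that] .
        show "Gk x y \<le> Gk ?x' y" if "FixR b y" for y using KU3a[OF b x1 that] .
        show "KM (Gk x) (Gk ?x') y (2*b - y)" if "MaxR b y" for y
          using KU3[OF b x1 that] unfolding KM_def by simp
      qed
      then show ?thesis using U[OF xS] UH[OF x'S] by simp
    qed
    have h3: "u_meas ?M x + u_meas ?M ?x' \<le> u_meas ?MH x + u_meas ?MH ?x'"
    proof -
      have sm: "(\<lambda>y. Gk x y + Gk ?x' y) \<in> borel_measurable borel" using Gm Gm by (rule borel_measurable_add)
      have sb: "\<bar>Gk x y + Gk ?x' y\<bar> \<le> 2*pi" if "y \<in> ?S" for y
        using Gb[OF xS that] Gb[OF x'S that] by simp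
      have "V h a (\<lambda>y. Gk x y + Gk ?x' y) \<le> V (polar b h) (polar b a) (\<lambda>y. Gk x y + Gk ?x' y)"
      proof (rule cmp[OF sm sm sb sb])
        show "Gk x y + Gk ?x' y \<le> Gk x y + Gk ?x' y" for y by simp
        show "KM (\<lambda>y. Gk x y + Gk ?x' y) (\<lambda>y. Gk x y + Gk ?x' y) y (2*b - y)" if "MaxR b y" for y
          using KU3(4)[OF b x1 that] unfolding KM_def by simp
      qed
      moreover have "V h a (Gk x) + V h a (Gk ?x') = V h a (\<lambda>y. Gk x y + Gk ?x' y)"
        unfolding V_def
        by (rule lin_gen[OF hi hn hz a_summable a_nonneg az Gm Gm]) (use Gb xS x'S in auto)
      moreover have "V (polar b h) (polar b a) (Gk x) + V (polar b h) (polar b a) (Gk ?x')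
          = V (polar b h) (polar b a) (\<lambda>y. Gk x y + Gk ?x' y)"
        unfolding V_def
        by (rule lin_gen[OF hHi hHn hHz aHs aHn aHz Gm Gm]) (use Gb xS x'S in auto)
      ultimately show ?thesis using U[OF xS] UH[OF xS] U[OF x'S] UH[OF x'S] by simp
    qed
    show ?thesis by (rule maj[OF conv incr h1 h2]) (use h3 in simp)
  qed
  have partB: "\<phi> (u_meas ?M x) \<le> \<phi> (u_meas ?MH x)" if "x \<in> BR" for x
    using incr Ub[OF that] by (rule monoD)
  have E1: "?M = ?MH" if z: "z \<in> CR" and eq: "u_meas ?M z = u_meas ?MH z" for z
  proof -
    have zB: "z \<in> BR" using z CRB by auto
    have zS: "z \<in> ?S" using zB BRS by auto
    have z1: "z \<in> (if 0 < b then {-pi..b} else {b..pi})" using zB by (simp add: BR_def)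
    have z2: "z \<in> (if 0 < b then {-pi<..b} else {b..<pi})" using z by (simp add: CR_def)
    have "(AE y in lebesgue. polar b h y = h y) \<and> (\<forall>y. polar b a y = a y)"
    proof (rule compare_eq[OF b hi hn hz a_summable a_nonneg az Gm])
      show "\<bar>Gk z y\<bar> \<le> pi" if "y \<in> ?S" for y using Gb[OF zS that] .
      show "Gk z (2*b - y) \<le> Gk z y" if "MaxR b y" for y using KU1[OF b z1 that] .
      show "Gk z (2*b - y) < Gk z y" if "MaxRs b y" for y using KU1s[OF b z2 that] .
      show "(\<integral>y. h y * Gk z y \<partial>lebesgue) + (\<Sum>\<^sub>\<infinity>y. a y * Gk z y) =
            (\<integral>y. polar b h y * Gk z y \<partial>lebesgue) + (\<Sum>\<^sub>\<infinity>y. polar b a y * Gk z y)"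
        using eq U[OF zS] UH[OF zS] unfolding V_def by simp
    qed
    then have AEh: "AE y in lebesgue. polar b h y = h y" and pa: "polar b a = a" by auto
    have "AE y in lebesgue. y \<in> {-pi<..<pi} \<longrightarrow> f y = polar b f y"
      using AEh
    proof eventually_elim
      case (elim y)
      have e1: "polar b h y = indicator {-pi..pi} y * polar b f y" by (simp add: hH)
      have e2: "h y = indicator {-pi..pi} y * f y" by (simp add: h_def)
      show ?case using elim e1 e2 by auto
    qed
    then have "disc_ac_measure f a = disc_ac_measure (polar b f) a" by (rule dam_eq)
    then show ?thesis using pa by simp
  qed
  have smono: "\<phi> u = \<phi> v \<longleftrightarrow> u = v" if "strict_mono \<phi>" for u v
    using strict_mono_eq[OF that] .
  show ?thesis
  proof (intro conjI)
    show "\<forall>x\<in>(if 0 < b then {b..pi} else {- pi..b}).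
       \<phi> (u_meas ?M x) + \<phi> (u_meas ?M (2 * b - x)) \<le> \<phi> (u_meas ?MH x) + \<phi> (u_meas ?MH (2 * b - x))"
      using partA unfolding AR_def by blast
    show "\<forall>x\<in>(if 0 < b then {- pi..b} else {b..pi}). \<phi> (u_meas ?M x) \<le> \<phi> (u_meas ?MH x)"
      using partB unfolding BR_def by blast
    show "strict_mono \<phi> \<longrightarrow>
     ((\<exists>x\<in>(if 0 < b then {- pi<..b} else {b..<pi}). \<phi> (u_meas ?M x) = \<phi> (u_meas ?MH x)) =
      (\<forall>x\<in>(if 0 < b then {- pi<..b} else {b..<pi}). \<phi> (u_meas ?M x) = \<phi> (u_meas ?MH x))) \<and>
     ((\<forall>x\<in>(if 0 < b then {- pi<..b} else {b..<pi}). \<phi> (u_meas ?M x) = \<phi> (u_meas ?MH x)) =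
      (?M = ?MH))"
    proof (intro impI)
      assume sm: "strict_mono \<phi>"
      have ex_meq: "(\<exists>x\<in>CR. \<phi> (u_meas ?M x) = \<phi> (u_meas ?MH x)) \<Longrightarrow> ?M = ?MH"
        using E1 smono[OF sm] by blast
      have meq_all: "?M = ?MH \<Longrightarrow> (\<forall>x\<in>CR. \<phi> (u_meas ?M x) = \<phi> (u_meas ?MH x))" by simp
      have all_ex: "(\<forall>x\<in>CR. \<phi> (u_meas ?M x) = \<phi> (u_meas ?MH x)) \<Longrightarrow> (\<exists>x\<in>CR. \<phi> (u_meas ?M x) = \<phi> (u_meas ?MH x))"
        using bC by blast
      show "((\<exists>x\<in>(if 0 < b then {- pi<..b} else {b..<pi}). \<phi> (u_meas ?M x) = \<phi> (u_meas ?MH x)) =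
        (\<forall>x\<in>(if 0 < b then {- pi<..b} else {b..<pi}). \<phi> (u_meas ?M x) = \<phi> (u_meas ?MH x))) \<and>
       ((\<forall>x\<in>(if 0 < b then {- pi<..b} else {b..<pi}). \<phi> (u_meas ?M x) = \<phi> (u_meas ?MH x)) =
        (?M = ?MH))"
        using ex_meq meq_all all_ex unfolding CR_def by blast
    qed
  qed
qed


end
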